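(* Let $\rho$ be a density operator on $\mathbb{C}^d$. Let $\rho'=U_A(\rho\otimes|0\rangle\langle0|^{\otimes d})U_A^\dagger$, a state of $d+1$ parties (the qudit and $d$ qubits), and let $\rho''=\Delta(\rho')$, a state of $d$ parties (the $d$ qubits). Then for every $2\le k\le d$ the following are equivalent: (i) $\mathrm{CN}(\rho)=k$; (ii) $\mathrm{ed}(\rho')=k+1$; (iii) $\mathrm{ed}(\rho'')=k$.
   Context: Fix an orthonormal (incoherent) basis $\{|i\rangle\}_{i=1}^d$ of $\mathbb{C}^d$. The coherence rank $\mathrm{CR}(|\psi\rangle)$ is the number of nonzero coefficients of $|\psi\rangle$ in this basis; the coherence number is $\mathrm{CN}(\rho)=\min_{\{p_i,|\psi_i\rangle\}}\max_i\mathrm{CR}(|\psi_i\rangle)$ over all pure-state decompositions $\rho=\sum_ip_i|\psi_i\rangle\langle\psi_i|$. For $1\le i\le d$, $|\underline{2^{d-i}}\rangle\in(\mathbb{C}^2)^{\otimes d}$ denotes $|0\rangle^{\otimes(i-1)}\otimes|1\rangle\otimes|0\rangle^{\otimes(d-i)}$. The activation unitary on $\mathbb{C}^d\otimes(\mathbb{C}^2)^{\otimes d}$ is $U_A=\sum_{i=1}^d|i\rangle\langle i|\otimes\mathbb{1}_2^{\otimes(i-1)}\otimes\sigma_x\otimes\mathbb{1}_2^{\otimes(d-i)}$ (so $U_A\,|i\rangle|0\rangle^{\otimes d}=|i\rangle|\underline{2^{d-i}}\rangle$). Let $\mathcal{F}$ be the Fourier unitary on $\mathbb{C}^d$, $\mathcal{F}|j\rangle=\frac1{\sqrt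 d}\sum_{m=1}^d e^{2\pi i jm/d}|m\rangle$, and for $m=1,\dots,d$ let $U_D^{(m)}=\bigotimes_{j=1}^d\big(|0\rangle\langle0|+e^{-2\pi i jm/d}|1\rangle\langle1|\big)$ acting on the $d$ qubits (the $j$-th factor on the $j$-th qubit). The one-way LOCC decoupling map is $\Delta(X)=\sum_{m=1}^d U_D^{(m)}\,\mathrm{Tr}_{\mathrm{qudit}}\big[(|m\rangle\langle m|\otimes\mathbb{1})(\mathcal{F}\otimes\mathbb{1})X(\mathcal{F}^\dagger\otimes\mathbb{1})\big]\,U_D^{(m)\dagger}$; on pure states it sends $\sum_ic_i|i\rangle|\underline{2^{d-i}}\rangle$ to $\sum_ic_i|\underline{2^{d-i}}\rangle$. A pure state of a multipartite system is $k$-producible if it is a tensor product of factors each pertaining to at most $k$ parties; a mixed state is $k$-producible if it is a convex combination of $k$-producible pure states; $\mathrm{ed}(\rho)=k$ (entanglement depth; genuinely $k$-partite entangled) means $\rho$ is $k$-producible but not $(k-1)$-producible. *)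

theory Defs
  imports Complex_Main "HOL-Library.Disjoint_Sets"
begin

text \<open>A vector on the space with orthonormal basis indexed by the finite set H is a
function 'a => complex vanishing outside H; an operator is a matrix 'a => 'a => complex
(matrix elements w.r.t. that basis) vanishing outside H x H.\<close>

definition is_state :: "'a set \<Rightarrow> ('a \<Rightarrow> complex) \<Rightarrow> bool" where
  "is_state H v \<longleftrightarrow> (\<forall>x. x \<notin> H \<longrightarrow> v x = 0) \<and> (\<Sum>x\<in>H. (cmod (v x))\<^sup>2) = 1"

definition density_op :: "'a set \<Rightarrow> ('a \<Rightarrow> 'a \<Rightarrow> complex) \<Rightarrow> bool" where
  "density_op H \<rho> \<longleftrightarrow>
     (\<forall>x y. x \<notin> H \<or> y \<notin> H \<longrightarrow> \<rho> x y = 0) \<and>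
     (\<forall>x\<in>H. \<forall>y\<in>H. \<rho> y x = cnj (\<rho> x y)) \<and>
     (\<forall>v :: 'a \<Rightarrow> complex.
        Im (\<Sum>x\<in>H. \<Sum>y\<in>H. cnj (v x) * \<rho> x y * v y) = 0 \<and>
        Re (\<Sum>x\<in>H. \<Sum>y\<in>H. cnj (v x) * \<rho> x y * v y) \<ge> 0) \<and>
     (\<Sum>x\<in>H. \<rho> x x) = 1"

definition pure_decomp :: "'a set \<Rightarrow> ('a \<Rightarrow> 'a \<Rightarrow> complex) \<Rightarrow> (real \<times> ('a \<Rightarrow> complex)) list \<Rightarrow> bool" where
  "pure_decomp H \<rho> ps \<longleftrightarrow>
     (\<forall>(p, v) \<in> set ps. p > 0 \<and> is_state H v) \<and>
     (\<Sum>(p, v) \<leftarrow> ps. p) = 1 \<and>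
     \<rho> = (\<lambda>x y. \<Sum>(p, v) \<leftarrow> ps. complex_of_real p * v x * cnj (v y))"

definition op_mult :: "'a set \<Rightarrow> ('a \<Rightarrow> 'a \<Rightarrow> complex) \<Rightarrow> ('a \<Rightarrow> 'a \<Rightarrow> complex) \<Rightarrow> ('a \<Rightarrow> 'a \<Rightarrow> complex)" where
  "op_mult H A B = (\<lambda>x y. if x \<in> H \<and> y \<in> H then (\<Sum>z\<in>H. A x z * B z y) else 0)"

definition op_adj :: "('a \<Rightarrow> 'a \<Rightarrow> complex) \<Rightarrow> ('a \<Rightarrow> 'a \<Rightarrow> complex)" where
  "op_adj A = (\<lambda>x y. cnj (A y x))"

section \<open>Coherence (qudit C^d, incoherent basis |1>,...,|d> encoded as indices 0..d-1)\<close>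

definition coh_rank :: "nat \<Rightarrow> (nat \<Rightarrow> complex) \<Rightarrow> nat" where
  "coh_rank d \<psi> = card {i \<in> {..<d}. \<psi> i \<noteq> 0}"

definition coh_number :: "nat \<Rightarrow> (nat \<Rightarrow> nat \<Rightarrow> complex) \<Rightarrow> nat" where
  "coh_number d \<rho> = (INF ps \<in> {ps. pure_decomp {..<d} \<rho> ps}.
                        Max ((\<lambda>(p, v). coh_rank d v) ` set ps))"

text \<open>Parties are natural numbers in a finite set S; party p has local dimension dims p.
A basis configuration is a function assigning to each party p in S a local basis index
below dims p (and 0 to parties outside S).\<close>

definition configs :: "nat set \<Rightarrow> (nat \<Rightarrow> nat) \<Rightarrow> (nat \<Rightarrow> nat) set" where
  "configs S dims = {f. (\<forall>p\<in>S. f p < dims p) \<and> (\<forall>p. p \<notin> S \<longrightarrow> f p = 0)}"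

definition restr :: "(nat \<Rightarrow> nat) \<Rightarrow> nat set \<Rightarrow> (nat \<Rightarrow> nat)" where
  "restr f B = (\<lambda>p. if p \<in> B then f p else 0)"

definition k_producible_pure :: "nat set \<Rightarrow> (nat \<Rightarrow> nat) \<Rightarrow> nat \<Rightarrow> ((nat \<Rightarrow> nat) \<Rightarrow> complex) \<Rightarrow> bool" where
  "k_producible_pure S dims k \<psi> \<longleftrightarrow>
     (\<exists>P (\<phi> :: nat set \<Rightarrow> (nat \<Rightarrow> nat) \<Rightarrow> complex).
        partition_on S P \<and> (\<forall>B\<in>P. card B \<le> k) \<and>
        (\<forall>f \<in> configs S dims. \<psi> f = (\<Prod>B\<in>P. \<phi> B (restr f B))))"

definition k_producible :: "nat set \<Rightarrow> (nat \<Rightarrow> nat) \<Rightarrow> nat \<Rightarrow> ((nat \<Rightarrow> nat) \<Rightarrow> (nat \<Rightarrow> nat) \<Rightarrow> complex) \<Rightarrow> bool" where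
  "k_producible S dims k \<rho> \<longleftrightarrow>
     (\<exists>ps. pure_decomp (configs S dims) \<rho> ps \<and>
           (\<forall>(p, v) \<in> set ps. k_producible_pure S dims k v))"

definition ent_depth_is :: "nat set \<Rightarrow> (nat \<Rightarrow> nat) \<Rightarrow> ((nat \<Rightarrow> nat) \<Rightarrow> (nat \<Rightarrow> nat) \<Rightarrow> complex) \<Rightarrow> nat \<Rightarrow> bool" where
  "ent_depth_is S dims \<rho> k \<longleftrightarrow> k_producible S dims k \<rho> \<and> \<not> k_producible S dims (k - 1) \<rho>"

section \<open>The concrete system: party 0 = qudit (dim d), parties 1..d = qubits\<close>

definition qdims :: "nat \<Rightarrow> nat \<Rightarrow> nat" where
  "qdims d = (\<lambda>p. if p = 0 then d else 2)"

abbreviation Hfull :: "nat \<Rightarrow> (nat \<Rightarrow> nat) set" where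
  "Hfull d \<equiv> configs {0..d} (qdims d)"

abbreviation Hqubits :: "nat \<Rightarrow> (nat \<Rightarrow> nat) set" where
  "Hqubits d \<equiv> configs {1..d} (qdims d)"

definition ext_zero :: "nat \<Rightarrow> (nat \<Rightarrow> nat \<Rightarrow> complex) \<Rightarrow> ((nat \<Rightarrow> nat) \<Rightarrow> (nat \<Rightarrow> nat) \<Rightarrow> complex)" where
  "ext_zero d \<rho> = (\<lambda>f g. if f \<in> Hfull d \<and> g \<in> Hfull d \<and> (\<forall>p\<in>{1..d}. f p = 0 \<and> g p = 0)
                          then \<rho> (f 0) (g 0) else 0)"

definition lift_qudit :: "nat \<Rightarrow> (nat \<Rightarrow> nat \<Rightarrow> complex) \<Rightarrow> ((nat \<Rightarrow> nat) \<Rightarrow> (nat \<Rightarrow> nat) \<Rightarrow> complex)" where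
  "lift_qudit d A = (\<lambda>f g. if f \<in> Hfull d \<and> g \<in> Hfull d \<and> (\<forall>p\<in>{1..d}. f p = g p)
                             then A (f 0) (g 0) else 0)"

text \<open>U_A = sum_i |i><i| (x) sigma_x on the i-th qubit (qudit index i-1 in 0-based encoding,
i-th qubit = party i).\<close>
definition U_A :: "nat \<Rightarrow> ((nat \<Rightarrow> nat) \<Rightarrow> (nat \<Rightarrow> nat) \<Rightarrow> complex)" where
  "U_A d = (\<lambda>f g. if f \<in> Hfull d \<and> g \<in> Hfull d \<and> f 0 = g 0 \<and>
                      (\<forall>p\<in>{1..d}. f p = (if p = g 0 + 1 then 1 - g p else g p))
                   then 1 else 0)"

definition rho1 :: "nat \<Rightarrow> (nat \<Rightarrow> nat \<Rightarrow> complex) \<Rightarrow> ((nat \<Rightarrow> nat) \<Rightarrow> (nat \<Rightarrow> nat) \<Rightarrow> complex)" where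
  "rho1 d \<rho> = op_mult (Hfull d) (op_mult (Hfull d) (U_A d) (ext_zero d \<rho>)) (op_adj (U_A d))"

text \<open>Fourier unitary: F|j> = 1/sqrt d sum_m e^(2 pi i j m/d) |m>, with |j> (j = 1..d)
encoded as index j-1.\<close>
definition fourier :: "nat \<Rightarrow> nat \<Rightarrow> nat \<Rightarrow> complex" where
  "fourier d x y = (if x < d \<and> y < d then
      exp (2 * of_real pi * \<i> * of_nat ((y + 1) * (x + 1)) / of_nat d) / of_real (sqrt (real d))
    else 0)"

text \<open>|m><m| for m = 1..d (index m-1)\<close>
definition ketbra_q :: "nat \<Rightarrow> nat \<Rightarrow> nat \<Rightarrow> nat \<Rightarrow> complex" where
  "ketbra_q d m = (\<lambda>x y. if x = m - 1 \<and> y = m - 1 \<and> m - 1 < d then 1 else 0)"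

definition U_D :: "nat \<Rightarrow> nat \<Rightarrow> ((nat \<Rightarrow> nat) \<Rightarrow> (nat \<Rightarrow> nat) \<Rightarrow> complex)" where
  "U_D d m = (\<lambda>f g. if f \<in> Hqubits d \<and> f = g then
      (\<Prod>j\<in>{1..d}. if f j = 1 then exp (- 2 * of_real pi * \<i> * of_nat (j * m) / of_nat d) else 1)
    else 0)"

definition ptrace_qudit :: "nat \<Rightarrow> ((nat \<Rightarrow> nat) \<Rightarrow> (nat \<Rightarrow> nat) \<Rightarrow> complex) \<Rightarrow> ((nat \<Rightarrow> nat) \<Rightarrow> (nat \<Rightarrow> nat) \<Rightarrow> complex)" where
  "ptrace_qudit d X = (\<lambda>f g. if f \<in> Hqubits d \<and> g \<in> Hqubits d then
      (\<Sum>i<d. X (f(0 := i)) (g(0 := i))) else 0)"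

definition Delta :: "nat \<Rightarrow> ((nat \<Rightarrow> nat) \<Rightarrow> (nat \<Rightarrow> nat) \<Rightarrow> complex) \<Rightarrow> ((nat \<Rightarrow> nat) \<Rightarrow> (nat \<Rightarrow> nat) \<Rightarrow> complex)" where
  "Delta d X = (\<lambda>f g. \<Sum>m\<in>{1..d}.
      op_mult (Hqubits d)
        (op_mult (Hqubits d) (U_D d m)
          (ptrace_qudit d
            (op_mult (Hfull d)
              (op_mult (Hfull d) (lift_qudit d (ketbra_q d m))
                (op_mult (Hfull d) (lift_qudit d (fourier d)) X))
              (lift_qudit d (op_adj (fourier d))))))
        (op_adj (U_D d m)) f g)"

definition rho2 :: "nat \<Rightarrow> (nat \<Rightarrow> nat \<Rightarrow> complex) \<Rightarrow> ((nat \<Rightarrow> nat) \<Rightarrow> (nat \<Rightarrow> nat) \<Rightarrow> complex)" where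
  "rho2 d \<rho> = Delta d (rho1 d \<rho>)"

end

theory Submission
  imports Defs
begin


lemma finite_configs: assumes "finite S" shows "finite (configs S dims)"
proof -
  have "configs S dims \<subseteq> (\<lambda>g p. if p \<in> S then g p else 0) ` (PiE S (\<lambda>p. {..<dims p}))"
  proof
    fix f assume f: "f \<in> configs S dims"
    have "f = (\<lambda>p. if p \<in> S then (restrict f S) p else 0)"
      using f by (auto simp: configs_def)
    moreover have "restrict f S \<in> PiE S (\<lambda>p. {..<dims p})" using f by (auto simp: configs_def)
    ultimately show "f \<in> (\<lambda>g p. if p \<in> S then g p else 0) ` (PiE S (\<lambda>p. {..<dims p}))" by blast
  qed
  moreover have "finite (PiE S (\<lambda>p. {..<dims p}))" using assms by (simp add: finite_PiE)
  ultimately show ?thesis using finite_subset by blast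
qed

lemma sum_over_image:
  fixes G :: "'b \<Rightarrow> 'c::comm_monoid_add"
  assumes "finite H" "inj_on t A" "t ` A \<subseteq> H" "\<And>z. z \<in> H \<Longrightarrow> z \<notin> t ` A \<Longrightarrow> G z = 0"
  shows "(\<Sum>z\<in>H. G z) = (\<Sum>i\<in>A. G (t i))"
proof -
  have "(\<Sum>z\<in>H. G z) = (\<Sum>z\<in>t ` A. G z)"
    using assms by (intro sum.mono_neutral_right) auto
  also have "\<dots> = (\<Sum>i\<in>A. G (t i))" using assms(2) by (simp add: sum.reindex)
  finally show ?thesis .
qed

lemma partition_finite: "partition_on S P \<Longrightarrow> finite S \<Longrightarrow> finite P"
  by (metis Union_upper finite_UnionD partition_onD1)

lemma rectangle:
  assumes fin: "finite S" and part: "partition_on S P"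
    and prod: "\<forall>f \<in> configs S dims. \<psi> f = (\<Prod>B\<in>P. \<phi> B (restr f B))"
    and B: "B \<in> P" and f: "f \<in> configs S dims" and g: "g \<in> configs S dims"
  shows "\<psi> f * \<psi> g = \<psi> (\<lambda>p. if p \<in> B then f p else g p) * \<psi> (\<lambda>p. if p \<in> B then g p else f p)"
proof -
  define h where "h = (\<lambda>p. if p \<in> B then f p else g p)"
  define h' where "h' = (\<lambda>p. if p \<in> B then g p else f p)"
  have finP: "finite P" using partition_finite part fin by blast
  have BS: "B \<subseteq> S" using part B by (auto simp: partition_on_def)
  have hc: "h \<in> configs S dims" "h' \<in> configs S dims" using f g BS
    by (auto simp: configs_def h_def h'_def)
  have dis: "\<And>C. C \<in> P \<Longrightarrow> C \<noteq> B \<Longrightarrow> C \<inter> B = {}"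
    using part B by (auto simp: partition_on_def disjoint_def)
  have split: "\<And>u. (\<Prod>C\<in>P. \<phi> C (restr u C)) = \<phi> B (restr u B) * (\<Prod>C\<in>P-{B}. \<phi> C (restr u C))"
    using finP B by (simp add: prod.remove)
  have r1: "restr h B = restr f B" "restr h' B = restr g B"
    by (auto simp: restr_def h_def h'_def)
  have r2: "\<And>C. C \<in> P - {B} \<Longrightarrow> restr h C = restr g C \<and> restr h' C = restr f C"
    using dis by (force simp: restr_def h_def h'_def)
  have e1: "(\<Prod>C\<in>P-{B}. \<phi> C (restr h C)) = (\<Prod>C\<in>P-{B}. \<phi> C (restr g C))"
    using r2 by (intro prod.cong) auto
  have e2: "(\<Prod>C\<in>P-{B}. \<phi> C (restr h' C)) = (\<Prod>C\<in>P-{B}. \<phi> C (restr f C))"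
    using r2 by (intro prod.cong) auto
  have "\<psi> h = \<phi> B (restr f B) * (\<Prod>C\<in>P-{B}. \<phi> C (restr g C))"
    using prod hc split[of h] r1 e1 by simp
  moreover have "\<psi> h' = \<phi> B (restr g B) * (\<Prod>C\<in>P-{B}. \<phi> C (restr f C))"
    using prod hc split[of h'] r1 e2 by simp
  moreover have "\<psi> f = \<phi> B (restr f B) * (\<Prod>C\<in>P-{B}. \<phi> C (restr f C))"
    using prod f split[of f] by simp
  moreover have "\<psi> g = \<phi> B (restr g B) * (\<Prod>C\<in>P-{B}. \<phi> C (restr g C))"
    using prod g split[of g] by simp
  ultimately show ?thesis unfolding h_def h'_def by (simp add: ac_simps)
qed

lemma construct_producible:
  assumes fin: "finite S" and B0: "B0 \<subseteq> S" "B0 \<noteq> {}" "card B0 \<le> k" and k: "1 \<le> k"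
    and vanish: "\<And>f p. f \<in> configs S dims \<Longrightarrow> p \<in> S - B0 \<Longrightarrow> f p \<noteq> 0 \<Longrightarrow> v f = 0"
  shows "k_producible_pure S dims k v"
proof -
  define P where "P = insert B0 ((\<lambda>p. {p}) ` (S - B0))"
  define \<phi> where "\<phi> = (\<lambda>B g. if B = B0 then v g else (if g (the_elem B) = 0 then 1 else (0::complex)))"
  have part: "partition_on S P"
    unfolding P_def partition_on_def disjoint_def using B0 by auto
  have cards: "\<forall>B\<in>P. card B \<le> k" using B0 k by (auto simp: P_def)
  have "\<psi>eq": "v f = (\<Prod>B\<in>P. \<phi> B (restr f B))" if f: "f \<in> configs S dims" for f
  proof -
    have nin: "B0 \<notin> (\<lambda>p. {p}) ` (S - B0)" using B0 by auto
    have "(\<Prod>B\<in>P. \<phi> B (restr f B)) = \<phi> B0 (restr f B0) * (\<Prod>B\<in>(\<lambda>p. {p}) ` (S - B0). \<phi> B (restr f B))"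
      unfolding P_def using fin nin by (simp add: prod.insert)
    also have "(\<Prod>B\<in>(\<lambda>p. {p}) ` (S - B0). \<phi> B (restr f B)) = (\<Prod>p\<in>S - B0. \<phi> {p} (restr f {p}))"
      by (simp add: prod.reindex)
    also have "\<dots> = (\<Prod>p\<in>S - B0. if f p = 0 then 1 else 0)"
      using B0 by (intro prod.cong) (auto simp: \<phi>_def restr_def)
    finally have eq: "(\<Prod>B\<in>P. \<phi> B (restr f B)) = v (restr f B0) * (\<Prod>p\<in>S - B0. if f p = 0 then 1 else 0)"
      by (simp add: \<phi>_def)
    show ?thesis
    proof (cases "\<forall>p\<in>S - B0. f p = 0")
      case True
      have "restr f B0 = f" unfolding restr_def
      proof
        fix p show "(if p \<in> B0 then f p else 0) = f p" using True f B0 by (cases "p \<in> S") (auto simp: configs_def)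
      qed
      then show ?thesis using eq True by simp
    next
      case False
      then obtain p where "p \<in> S - B0" "f p \<noteq> 0" by blast
      then have "(\<Prod>p\<in>S - B0. if f p = 0 then 1 else 0) = (0::complex)" using fin
        by (subst prod_zero_iff) auto
      then show ?thesis using eq vanish[OF f] \<open>p \<in> S - B0\<close> \<open>f p \<noteq> 0\<close> by simp
    qed
  qed
  show ?thesis unfolding k_producible_pure_def using part cards \<psi>eq by blast
qed


definition liftv :: "(nat \<Rightarrow> 'b) \<Rightarrow> nat \<Rightarrow> (nat \<Rightarrow> complex) \<Rightarrow> 'b \<Rightarrow> complex" where
  "liftv t d c = (\<lambda>f. \<Sum>i<d. if f = t i then c i else 0)"

definition projv :: "(nat \<Rightarrow> 'b) \<Rightarrow> nat \<Rightarrow> ('b \<Rightarrow> complex) \<Rightarrow> nat \<Rightarrow> complex" where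
  "projv t d v = (\<lambda>i. if i < d then v (t i) else 0)"

lemma liftv_t: "inj_on t {..<d} \<Longrightarrow> i < d \<Longrightarrow> liftv t d c (t i) = c i"
proof -
  assume inj: "inj_on t {..<d}" and i: "i < d"
  have "liftv t d c (t i) = (\<Sum>j<d. if j = i then c i else 0)"
    unfolding liftv_def using inj i by (intro sum.cong) (auto dest: inj_onD)
  then show ?thesis using i by simp
qed

lemma liftv_out: "f \<notin> t ` {..<d} \<Longrightarrow> liftv t d c f = 0"
  unfolding liftv_def by (intro sum.neutral) auto

lemma sum_list_cong_pairs: "(\<And>p v. (p, v) \<in> set ps \<Longrightarrow> F p v = G p v) \<Longrightarrow>
   (\<Sum>(p, v) \<leftarrow> ps. F p v) = (\<Sum>(p, v) \<leftarrow> ps. G p v)"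
  by (induction ps) auto

lemma sum_list_zero_pairs[simp]: "(\<Sum>(p, v) \<leftarrow> ps. (0::'c::comm_monoid_add)) = 0"
  by (induction ps) auto

lemma transfer_up:
  assumes finH: "finite H" and inj: "inj_on t {..<d}" and sub: "t ` {..<d} \<subseteq> H"
    and Rt: "\<And>a b. a < d \<Longrightarrow> b < d \<Longrightarrow> R (t a) (t b) = \<rho> a b"
    and R0: "\<And>f g. f \<notin> t ` {..<d} \<or> g \<notin> t ` {..<d} \<Longrightarrow> R f g = 0"
    and pd: "pure_decomp {..<d} \<rho> ps"
  shows "pure_decomp H R (map (\<lambda>(p, c). (p, liftv t d c)) ps)"
proof -
  have st: "is_state H (liftv t d c)" if "is_state {..<d} c" for c
  proof -
    have "(\<Sum>x\<in>H. (cmod (liftv t d c x))\<^sup>2) = (\<Sum>i<d. (cmod (liftv t d c (t i)))\<^sup>2)"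
      using finH inj sub by (intro sum_over_image) (auto simp: liftv_out)
    also have "\<dots> = (\<Sum>i<d. (cmod (c i))\<^sup>2)" using inj by (simp add: liftv_t)
    moreover have "\<forall>x. x \<notin> H \<longrightarrow> liftv t d c x = 0" using sub by (auto intro!: liftv_out)
    ultimately show ?thesis using that by (auto simp: is_state_def)
  qed
  have eq: "R = (\<lambda>x y. \<Sum>(p, v)\<leftarrow>map (\<lambda>(p, c). (p, liftv t d c)) ps. complex_of_real p * v x * cnj (v y))"
  proof (intro ext)
    fix f g
    show "R f g = (\<Sum>(p, v)\<leftarrow>map (\<lambda>(p, c). (p, liftv t d c)) ps. complex_of_real p * v f * cnj (v g))"
    proof (cases "f \<in> t ` {..<d} \<and> g \<in> t ` {..<d}")
      case True
      then obtain a b where ab: "a < d" "b < d" "f = t a" "g = t b" by auto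
      have "R f g = \<rho> a b" using Rt ab by simp
      also have "\<dots> = (\<Sum>(p, v)\<leftarrow>ps. complex_of_real p * v a * cnj (v b))"
        using pd by (simp add: pure_decomp_def)
      also have "\<dots> = (\<Sum>(p, v)\<leftarrow>ps. complex_of_real p * liftv t d v f * cnj (liftv t d v g))"
        using ab inj by (intro sum_list_cong_pairs) (simp add: liftv_t)
      finally show ?thesis by (simp add: o_def case_prod_unfold)
    next
      case False
      then have "R f g = 0" using R0 by blast
      moreover have "(\<Sum>(p, v)\<leftarrow>ps. complex_of_real p * liftv t d v f * cnj (liftv t d v g)) = 0"
        using False by (subst sum_list_cong_pairs[where G="\<lambda>_ _. 0"]) (auto simp: liftv_out)
      ultimately show ?thesis by (simp add: o_def case_prod_unfold)
    qed
  qed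
  show ?thesis unfolding pure_decomp_def
    using pd st eq by (auto simp: pure_decomp_def o_def case_prod_unfold)
qed

lemma transfer_down:
  assumes finH: "finite H" and inj: "inj_on t {..<d}" and sub: "t ` {..<d} \<subseteq> H"
    and Rt: "\<And>a b. a < d \<Longrightarrow> b < d \<Longrightarrow> R (t a) (t b) = \<rho> a b"
    and R0: "\<And>f g. f \<notin> t ` {..<d} \<or> g \<notin> t ` {..<d} \<Longrightarrow> R f g = 0"
    and rho0: "\<And>a b. a \<notin> {..<d} \<or> b \<notin> {..<d} \<Longrightarrow> \<rho> a b = 0"
    and pd: "pure_decomp H R qs"
  shows "\<forall>(p, v) \<in> set qs. v = liftv t d (projv t d v)"
    and "pure_decomp {..<d} \<rho> (map (\<lambda>(p, v). (p, projv t d v)) qs)"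
proof -
  have vz: "v f = 0" if pv: "(p, v) \<in> set qs" and f: "f \<notin> t ` {..<d}" for p v f
  proof (cases "f \<in> H")
    case False then show ?thesis using pd pv by (auto simp: pure_decomp_def is_state_def)
  next
    case True
    have "complex_of_real (\<Sum>(p, v)\<leftarrow>qs. p * (cmod (v f))\<^sup>2) = (\<Sum>(p, v)\<leftarrow>qs. complex_of_real p * v f * cnj (v f))"
    proof (induction qs)
      case (Cons a qs) then show ?case
        by (cases a) (simp add: mult.assoc complex_norm_square del: of_real_power)
    qed simp
    also have "\<dots> = R f f" using pd by (simp add: pure_decomp_def)
    also have "\<dots> = 0" using R0 f by blast
    finally have "(\<Sum>(p, v)\<leftarrow>qs. p * (cmod (v f))\<^sup>2) = 0" by simp
    then have "\<forall>x\<in>set (map (\<lambda>(p, v). p * (cmod (v f))\<^sup>2) qs). x = 0"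
      using pd by (subst sum_list_nonneg_eq_0_iff[symmetric]) (auto simp: pure_decomp_def)
    then have "p * (cmod (v f))\<^sup>2 = 0" using pv by force
    moreover have "p > 0" using pd pv by (auto simp: pure_decomp_def)
    ultimately show ?thesis by simp
  qed
  have lp: "v = liftv t d (projv t d v)" if pv: "(p, v) \<in> set qs" for p v
  proof
    fix f show "v f = liftv t d (projv t d v) f"
    proof (cases "f \<in> t ` {..<d}")
      case True then obtain a where "a < d" "f = t a" by auto
      then show ?thesis using inj by (simp add: liftv_t projv_def)
    next
      case False then show ?thesis using vz[OF pv] by (simp add: liftv_out)
    qed
  qed
  then show "\<forall>(p, v) \<in> set qs. v = liftv t d (projv t d v)" by auto
  have st: "is_state {..<d} (projv t d v)" if pv: "(p, v) \<in> set qs" for p v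
  proof -
    have "(\<Sum>x\<in>H. (cmod (v x))\<^sup>2) = (\<Sum>i<d. (cmod (v (t i)))\<^sup>2)"
      using finH inj sub vz[OF pv] by (intro sum_over_image) auto
    moreover have "(\<Sum>x\<in>H. (cmod (v x))\<^sup>2) = 1" using pd pv by (auto simp: pure_decomp_def is_state_def)
    ultimately show ?thesis by (simp add: is_state_def projv_def)
  qed
  have eq: "\<rho> = (\<lambda>x y. \<Sum>(p, v)\<leftarrow>map (\<lambda>(p, v). (p, projv t d v)) qs. complex_of_real p * v x * cnj (v y))"
  proof (intro ext)
    fix a b
    show "\<rho> a b = (\<Sum>(p, v)\<leftarrow>map (\<lambda>(p, v). (p, projv t d v)) qs. complex_of_real p * v a * cnj (v b))"
    proof (cases "a < d \<and> b < d")
      case True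
      have "\<rho> a b = R (t a) (t b)" using Rt True by simp
      also have "\<dots> = (\<Sum>(p, v)\<leftarrow>qs. complex_of_real p * v (t a) * cnj (v (t b)))"
        using pd by (simp add: pure_decomp_def)
      finally show ?thesis using True by (simp add: o_def case_prod_unfold projv_def)
    next
      case False
      then have "\<rho> a b = 0" using rho0 by auto
      moreover have "(\<Sum>(p, v)\<leftarrow>qs. complex_of_real p * projv t d v a * cnj (projv t d v b)) = 0"
        using False by (subst sum_list_cong_pairs[where G="\<lambda>_ _. 0"]) (auto simp: projv_def)
      ultimately show ?thesis by (simp add: o_def case_prod_unfold)
    qed
  qed
  show "pure_decomp {..<d} \<rho> (map (\<lambda>(p, v). (p, projv t d v)) qs)"
    unfolding pure_decomp_def using pd st eq by (auto simp: pure_decomp_def o_def case_prod_unfold)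
qed



definition tT :: "nat \<Rightarrow> nat \<Rightarrow> nat" where
  "tT i = (\<lambda>p. if p = 0 then i else if p = Suc i then 1 else 0)"

definition eE :: "nat \<Rightarrow> nat \<Rightarrow> nat" where
  "eE i = (\<lambda>p. if p = Suc i then 1 else 0)"

lemma inj_tT: "inj_on tT A"
proof (rule inj_onI)
  fix x y assume "tT x = tT y"
  then have "tT x 0 = tT y 0" by simp
  then show "x = y" by (simp add: tT_def)
qed

lemma inj_eE: "inj_on eE A"
proof (rule inj_onI)
  fix x y assume "eE x = eE y"
  then have "eE x (Suc x) = eE y (Suc x)" by simp
  then show "x = y" by (auto simp: eE_def split: if_splits)
qed

lemma tT_in: "tT ` {..<d} \<subseteq> Hfull d"
  unfolding configs_def qdims_def tT_def by auto

lemma eE_in: "eE ` {..<d} \<subseteq> Hqubits d"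
  unfolding configs_def qdims_def eE_def by auto

lemma card_supp: "coh_rank d c = card {i\<in>{..<d}. c i \<noteq> 0}"
  by (simp add: coh_rank_def)

lemma part_ex: "partition_on S P \<Longrightarrow> x \<in> S \<Longrightarrow> \<exists>B\<in>P. x \<in> B"
  by (auto simp: partition_on_def)

lemma part_uniq: "partition_on S P \<Longrightarrow> B \<in> P \<Longrightarrow> C \<in> P \<Longrightarrow> x \<in> B \<Longrightarrow> x \<in> C \<Longrightarrow> B = C"
  by (auto simp: partition_on_def disjoint_def)

lemma part_sub: "partition_on S P \<Longrightarrow> B \<in> P \<Longrightarrow> B \<subseteq> S"
  by (auto simp: partition_on_def)

lemma lift_nz: "liftv t d c f \<noteq> 0 \<Longrightarrow> \<exists>a<d. f = t a"
proof (rule ccontr)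
  assume a: "liftv t d c f \<noteq> 0" "\<not> (\<exists>a<d. f = t a)"
  then have "f \<notin> t ` {..<d}" by auto
  then show False using a(1) liftv_out by metis
qed


lemma prodT_down:
  assumes kp: "k_producible_pure {0..d} (qdims d) j (liftv tT d c)" and j: "2 \<le> j"
  shows "coh_rank d c \<le> j - 1"
proof -
  define I where "I = {i\<in>{..<d}. c i \<noteq> 0}"
  have finI: "finite I" by (simp add: I_def)
  have cr: "coh_rank d c = card I" by (simp add: card_supp I_def)
  show ?thesis
  proof (cases "card I \<le> 1")
    case True then show ?thesis using j by (simp add: cr)
  next
    case False
    from kp obtain P \<phi> where part: "partition_on {0..d} P" and cards: "\<forall>B\<in>P. card B \<le> j"
      and prod: "\<forall>f \<in> configs {0..d} (qdims d). liftv tT d c f = (\<Prod>B\<in>P. \<phi> B (restr f B))"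
      unfolding k_producible_pure_def by blast
    obtain B0 where B0: "B0 \<in> P" "0 \<in> B0" using part_ex[OF part, of 0] by auto
    have "Suc i \<in> B0" if iI: "i \<in> I" for i
    proof -
      have "I \<noteq> {i}" using False by auto
      then obtain i' where i': "i' \<in> I" "i' \<noteq> i" using iI by blast
      have id: "i < d" "i' < d" "c i \<noteq> 0" "c i' \<noteq> 0" using iI i' by (auto simp: I_def)
      obtain B where B: "B \<in> P" "Suc i \<in> B" using part_ex[OF part, of "Suc i"] id by auto
      show ?thesis
      proof (cases "0 \<in> B")
        case True then show ?thesis using part_uniq[OF part B(1) B0(1)] B B0 by auto
      next
        case False
        define h where "h = (\<lambda>p. if p \<in> B then tT i p else tT i' p)"
        have cf: "tT i \<in> configs {0..d} (qdims d)" "tT i' \<in> configs {0..d} (qdims d)"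
          using tT_in id by (auto simp del: atLeastAtMost_iff)
        have "liftv tT d c (tT i) * liftv tT d c (tT i') = liftv tT d c h * liftv tT d c (\<lambda>p. if p \<in> B then tT i' p else tT i p)"
          unfolding h_def by (rule rectangle[OF _ part prod B(1) cf]) simp
        moreover have "liftv tT d c (tT i) * liftv tT d c (tT i') \<noteq> 0"
          using id inj_tT by (simp add: liftv_t)
        ultimately have "liftv tT d c h \<noteq> 0" by auto
        then obtain a where "a < d" "h = tT a" using lift_nz[of tT d c h] by blast
        then have "h 0 = a" "h (Suc i) = tT a (Suc i)" by (simp_all add: tT_def)
        moreover have "h 0 = i'" using False by (simp add: h_def tT_def)
        moreover have "h (Suc i) = 1" using B by (simp add: h_def tT_def)
        ultimately have e1: "tT i' (Suc i) = 1" by simp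
        have "i' = i"
        proof (rule ccontr)
          assume "i' \<noteq> i" then have "tT i' (Suc i) = 0" by (simp add: tT_def)
          with e1 show False by simp
        qed
        then show ?thesis using i' by simp
      qed
    qed
    then have sub: "insert 0 (Suc ` I) \<subseteq> B0" using B0 by auto
    have "finite B0" using part_sub[OF part B0(1)] finite_subset by blast
    then have "card (insert 0 (Suc ` I)) \<le> card B0" using sub card_mono by blast
    moreover have "card (insert 0 (Suc ` I)) = card I + 1" using finI by (simp add: card_image)
    moreover have "card B0 \<le> j" using cards B0(1) by blast
    ultimately show ?thesis by (simp add: cr)
  qed
qed


lemma prodT_up:
  assumes r: "coh_rank d c \<le> j - 1" and j: "2 \<le> j"
  shows "k_producible_pure {0..d} (qdims d) j (liftv tT d c)"
proof -
  define I where "I = {i\<in>{..<d}. c i \<noteq> 0}"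
  have finI: "finite I" by (simp add: I_def)
  have cr: "coh_rank d c = card I" by (simp add: card_supp I_def)
  have cardB: "card (insert 0 (Suc ` I)) = card I + 1" using finI by (simp add: card_image)
  show ?thesis
  proof (rule construct_producible[where ?B0.0 = "insert 0 (Suc ` I)"])
    show "insert 0 (Suc ` I) \<subseteq> {0..d}" by (auto simp: I_def)
    show "card (insert 0 (Suc ` I)) \<le> j" using cardB r j by (simp add: cr)
    fix f p assume f: "f \<in> configs {0..d} (qdims d)" and p: "p \<in> {0..d} - insert 0 (Suc ` I)" and fp: "f p \<noteq> 0"
    show "liftv tT d c f = 0"
    proof (rule ccontr)
      assume "liftv tT d c f \<noteq> 0"
      then obtain a where a: "a < d" "f = tT a" using lift_nz[of tT d c f] by blast
      then have "c a \<noteq> 0" using \<open>liftv tT d c f \<noteq> 0\<close> inj_tT by (simp add: liftv_t)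
      then have "a \<in> I" using a by (simp add: I_def)
      then show False using p fp a by (auto simp: tT_def split: if_splits)
    qed
  qed (use j in auto)
qed


lemma prodE_down:
  assumes kp: "k_producible_pure {1..d} (qdims d) j (liftv eE d c)" and nz: "i0 < d" "c i0 \<noteq> 0"
  shows "coh_rank d c \<le> j"
proof -
  define I where "I = {i\<in>{..<d}. c i \<noteq> 0}"
  have finI: "finite I" by (simp add: I_def)
  have cr: "coh_rank d c = card I" by (simp add: card_supp I_def)
  have i0I: "i0 \<in> I" using nz by (simp add: I_def)
  from kp obtain P \<phi> where part: "partition_on {1..d} P" and cards: "\<forall>B\<in>P. card B \<le> j"
    and prod: "\<forall>f \<in> configs {1..d} (qdims d). liftv eE d c f = (\<Prod>B\<in>P. \<phi> B (restr f B))"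
    unfolding k_producible_pure_def by blast
  obtain B0 where B0: "B0 \<in> P" "Suc i0 \<in> B0" using part_ex[OF part, of "Suc i0"] nz by auto
  have "Suc i \<in> B0" if iI: "i \<in> I" for i
  proof -
    have id: "i < d" "c i \<noteq> 0" using iI by (auto simp: I_def)
    obtain B where B: "B \<in> P" "Suc i \<in> B" using part_ex[OF part, of "Suc i"] id by auto
    show ?thesis
    proof (cases "Suc i0 \<in> B")
      case True then show ?thesis using part_uniq[OF part B(1) B0(1)] B B0 by auto
    next
      case False
      then have ne: "i \<noteq> i0" using B by auto
      define h where "h = (\<lambda>p. if p \<in> B then eE i p else eE i0 p)"
      have cf: "eE i \<in> configs {1..d} (qdims d)" "eE i0 \<in> configs {1..d} (qdims d)"
        using eE_in id nz by auto
      have "liftv eE d c (eE i) * liftv eE d c (eE i0) = liftv eE d c h * liftv eE d c (\<lambda>p. if p \<in> B then eE i0 p else eE i p)"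
        unfolding h_def by (rule rectangle[OF _ part prod B(1) cf]) simp
      moreover have "liftv eE d c (eE i) * liftv eE d c (eE i0) \<noteq> 0"
        using id nz inj_eE by (simp add: liftv_t)
      ultimately have "liftv eE d c h \<noteq> 0" by auto
      then obtain a where ha: "h = eE a" using lift_nz[of eE d c h] by blast
      have "h (Suc i0) = eE i0 (Suc i0)" unfolding h_def using False by simp
      moreover have "h (Suc i) = eE i (Suc i)" unfolding h_def using B by simp
      ultimately have "h (Suc i0) = 1" "h (Suc i) = 1" unfolding eE_def by simp_all
      then have "eE a (Suc i0) = 1" "eE a (Suc i) = 1" unfolding ha by simp_all
      note e1 = this
      have "a = i0"
      proof (rule ccontr)
        assume "a \<noteq> i0" then have "eE a (Suc i0) = 0" by (simp add: eE_def)
        with e1(1) show False by simp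
      qed
      moreover have "a = i"
      proof (rule ccontr)
        assume "a \<noteq> i" then have "eE a (Suc i) = 0" by (simp add: eE_def)
        with e1(2) show False by simp
      qed
      ultimately show ?thesis using ne by simp
    qed
  qed
  then have sub: "Suc ` I \<subseteq> B0" by auto
  have "finite B0" using part_sub[OF part B0(1)] finite_subset by blast
  then have "card (Suc ` I) \<le> card B0" using sub card_mono by blast
  moreover have "card (Suc ` I) = card I" by (simp add: card_image)
  moreover have "card B0 \<le> j" using cards B0(1) by blast
  ultimately show ?thesis by (simp add: cr)
qed


lemma prodE_up:
  assumes r: "coh_rank d c \<le> j" and j: "1 \<le> j" and nz: "i0 < d" "c i0 \<noteq> 0"
  shows "k_producible_pure {1..d} (qdims d) j (liftv eE d c)"
proof -
  define I where "I = {i\<in>{..<d}. c i \<noteq> 0}"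
  have finI: "finite I" by (simp add: I_def)
  have cr: "coh_rank d c = card I" by (simp add: card_supp I_def)
  have i0I: "i0 \<in> I" using nz by (simp add: I_def)
  have cardB: "card (Suc ` I) = card I" by (simp add: card_image)
  show ?thesis
  proof (rule construct_producible[where ?B0.0 = "Suc ` I"])
    show "Suc ` I \<subseteq> {1..d}" by (auto simp: I_def)
    show "Suc ` I \<noteq> {}" using i0I by auto
    show "card (Suc ` I) \<le> j" using cardB r by (simp add: cr)
    fix f p assume f: "f \<in> configs {1..d} (qdims d)" and p: "p \<in> {1..d} - Suc ` I" and fp: "f p \<noteq> 0"
    show "liftv eE d c f = 0"
    proof (rule ccontr)
      assume "liftv eE d c f \<noteq> 0"
      then obtain a where a: "a < d" "f = eE a" using lift_nz[of eE d c f] by blast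
      then have "c a \<noteq> 0" using \<open>liftv eE d c f \<noteq> 0\<close> inj_eE by (simp add: liftv_t)
      then have "a \<in> I" using a by (simp add: I_def)
      then show False using p fp a by (auto simp: eE_def split: if_splits)
    qed
  qed (use j in auto)
qed



definition zZ :: "nat \<Rightarrow> nat \<Rightarrow> nat" where
  "zZ i = (\<lambda>p. if p = 0 then i else 0)"

lemma finite_Hfull: "finite (Hfull d)" by (rule finite_configs) simp
lemma finite_Hqubits: "finite (Hqubits d)" by (rule finite_configs) simp

lemma Hfull_out: "f \<in> Hfull d \<Longrightarrow> p > d \<Longrightarrow> f p = 0"
  unfolding configs_def by auto

lemma Hfull_0: "f \<in> Hfull d \<Longrightarrow> f 0 < d"
proof -
  assume "f \<in> Hfull d"
  then have "\<forall>p\<in>{0..d}. f p < qdims d p" by (simp add: configs_def)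
  then have "f 0 < qdims d 0" by simp
  then show ?thesis by (simp add: qdims_def)
qed

lemma upd0_in: "f \<in> Hfull d \<Longrightarrow> i < d \<Longrightarrow> f(0 := i) \<in> Hfull d"
  unfolding configs_def qdims_def by auto

lemma upd0_in_q: "h \<in> Hqubits d \<Longrightarrow> i < d \<Longrightarrow> h(0 := i) \<in> Hfull d"
  unfolding configs_def qdims_def by auto

lemma inj_upd0: "inj_on (\<lambda>i. f(0 := i)) A"
proof (rule inj_onI)
  fix x y assume "f(0 := x) = f(0 := y)"
  then have "(f(0 := x)) 0 = (f(0 := y)) 0" by simp
  then show "x = y" by simp
qed

lemma same_qubits_eq:
  assumes "f \<in> Hfull d" "z \<in> Hfull d" "\<forall>p\<in>{1..d}. f p = z p"
  shows "z = f(0 := z 0)"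
proof
  fix p show "z p = (f(0 := z 0)) p"
  proof (cases "p = 0")
    case False
    show ?thesis
    proof (cases "p \<le> d")
      case True then show ?thesis using assms False by auto
    next
      case False2: False
      then show ?thesis using Hfull_out[OF assms(1), of p] Hfull_out[OF assms(2), of p] False by auto
    qed
  qed simp
qed

lemma LQ_left:
  assumes f: "f \<in> Hfull d" and g: "g \<in> Hfull d"
  shows "op_mult (Hfull d) (lift_qudit d A) X f g = (\<Sum>i<d. A (f 0) i * X (f(0 := i)) g)"
proof -
  have "op_mult (Hfull d) (lift_qudit d A) X f g = (\<Sum>z\<in>Hfull d. lift_qudit d A f z * X z g)"
    using f g by (simp add: op_mult_def)
  also have "\<dots> = (\<Sum>i<d. lift_qudit d A f (f(0 := i)) * X (f(0 := i)) g)"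
  proof (rule sum_over_image[OF finite_Hfull inj_upd0])
    show "(\<lambda>i. f(0 := i)) ` {..<d} \<subseteq> Hfull d" using upd0_in[OF f] by auto
    fix z assume z: "z \<in> Hfull d" "z \<notin> (\<lambda>i. f(0 := i)) ` {..<d}"
    show "lift_qudit d A f z * X z g = 0"
    proof (cases "\<forall>p\<in>{1..d}. f p = z p")
      case True
      then have "z = f(0 := z 0)" using same_qubits_eq f z(1) by blast
      then show ?thesis using z Hfull_0[OF z(1)] by (metis image_eqI lessThan_iff)
    next
      case False
      then have "lift_qudit d A f z = 0" unfolding lift_qudit_def by auto
      then show ?thesis by simp
    qed
  qed
  also have "\<dots> = (\<Sum>i<d. A (f 0) i * X (f(0 := i)) g)"
    using f by (intro sum.cong) (auto simp: lift_qudit_def upd0_in)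
  finally show ?thesis .
qed

lemma LQ_right:
  assumes f: "f \<in> Hfull d" and g: "g \<in> Hfull d"
  shows "op_mult (Hfull d) X (lift_qudit d B) f g = (\<Sum>i<d. X f (g(0 := i)) * B i (g 0))"
proof -
  have "op_mult (Hfull d) X (lift_qudit d B) f g = (\<Sum>z\<in>Hfull d. X f z * lift_qudit d B z g)"
    using f g by (simp add: op_mult_def)
  also have "\<dots> = (\<Sum>i<d. X f (g(0 := i)) * lift_qudit d B (g(0 := i)) g)"
  proof (rule sum_over_image[OF finite_Hfull inj_upd0])
    show "(\<lambda>i. g(0 := i)) ` {..<d} \<subseteq> Hfull d" using upd0_in[OF g] by auto
    fix z assume z: "z \<in> Hfull d" "z \<notin> (\<lambda>i. g(0 := i)) ` {..<d}"
    show "X f z * lift_qudit d B z g = 0"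
    proof (cases "\<forall>p\<in>{1..d}. z p = g p")
      case True
      then have "z = g(0 := z 0)" using same_qubits_eq g z(1) by (metis)
      then show ?thesis using z Hfull_0[OF z(1)] by (metis image_eqI lessThan_iff)
    next
      case False
      then have "lift_qudit d B z g = 0" unfolding lift_qudit_def by auto
      then show ?thesis by simp
    qed
  qed
  also have "\<dots> = (\<Sum>i<d. X f (g(0 := i)) * B i (g 0))"
    using g by (intro sum.cong) (auto simp: lift_qudit_def upd0_in)
  finally show ?thesis .
qed


lemma zZ_in: "i < d \<Longrightarrow> zZ i \<in> Hfull d"
  unfolding configs_def qdims_def zZ_def by auto

lemma inj_zZ: "inj_on zZ A"
proof (rule inj_onI)
  fix x y assume "zZ x = zZ y"
  then have "zZ x 0 = zZ y 0" by simp
  then show "x = y" by (simp add: zZ_def)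
qed

lemma tT_eq_iff:
  assumes f: "f \<in> Hfull d" and i: "i < d"
  shows "f = tT i \<longleftrightarrow> (f 0 = i \<and> (\<forall>p\<in>{1..d}. f p = (if p = i + 1 then 1 else 0)))"
proof
  assume "f = tT i" then show "f 0 = i \<and> (\<forall>p\<in>{1..d}. f p = (if p = i + 1 then 1 else 0))"
    by (auto simp: tT_def)
next
  assume h: "f 0 = i \<and> (\<forall>p\<in>{1..d}. f p = (if p = i + 1 then 1 else 0))"
  show "f = tT i"
  proof
    fix p show "f p = tT i p"
    proof (cases "p = 0")
      case True then show ?thesis using h by (simp add: tT_def)
    next
      case False
      show ?thesis
      proof (cases "p \<le> d")
        case True then show ?thesis using h False by (auto simp: tT_def)
      next
        case False2: False
        then have "f p = 0" using Hfull_out[OF f, of p] by simp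
        moreover have "p \<noteq> Suc i" using False2 i by simp
        ultimately show ?thesis using False by (simp add: tT_def)
      qed
    qed
  qed
qed

lemma U_Z: assumes f: "f \<in> Hfull d" and i: "i < d"
  shows "U_A d f (zZ i) = (if f = tT i then 1 else 0)"
proof -
  have "U_A d f (zZ i) = (if f 0 = i \<and> (\<forall>p\<in>{1..d}. f p = (if p = i + 1 then 1 else 0)) then 1 else 0)"
    unfolding U_A_def using f zZ_in[OF i] by (simp add: zZ_def)
  then show ?thesis using tT_eq_iff[OF f i] by simp
qed

lemma zero_qubits_eq:
  assumes z: "z \<in> Hfull d" and q: "\<forall>p\<in>{1..d}. z p = 0"
  shows "z = zZ (z 0)"
proof
  fix p show "z p = zZ (z 0) p"
  proof (cases "p = 0")
    case False
    then show ?thesis using q Hfull_out[OF z, of p] by (cases "p \<le> d") (auto simp: zZ_def)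
  qed (simp add: zZ_def)
qed

lemma ext_zero_Z: "i < d \<Longrightarrow> ext_zero d \<rho> (zZ i) g = (if g \<in> Hfull d \<and> (\<forall>p\<in>{1..d}. g p = 0) then \<rho> i (g 0) else 0)"
  unfolding ext_zero_def using zZ_in[of i d] by (auto simp: zZ_def)

lemma ext_zero_nz: "ext_zero d \<rho> z g \<noteq> 0 \<Longrightarrow> z \<in> zZ ` {..<d}"
proof -
  assume a: "ext_zero d \<rho> z g \<noteq> 0"
  then have z: "z \<in> Hfull d" "\<forall>p\<in>{1..d}. z p = 0" unfolding ext_zero_def by (auto split: if_splits)
  then have "z = zZ (z 0)" by (rule zero_qubits_eq)
  moreover have "z 0 < d" using Hfull_0 z(1) by blast
  ultimately show ?thesis by blast
qed

lemma UE_eq: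
  assumes f: "f \<in> Hfull d" and g: "g \<in> Hfull d"
  shows "op_mult (Hfull d) (U_A d) (ext_zero d \<rho>) f g =
         (if f \<in> tT ` {..<d} then ext_zero d \<rho> (zZ (f 0)) g else 0)"
proof -
  have "op_mult (Hfull d) (U_A d) (ext_zero d \<rho>) f g = (\<Sum>z\<in>Hfull d. U_A d f z * ext_zero d \<rho> z g)"
    using f g by (simp add: op_mult_def)
  also have "\<dots> = (\<Sum>i<d. U_A d f (zZ i) * ext_zero d \<rho> (zZ i) g)"
  proof (rule sum_over_image[OF finite_Hfull inj_zZ])
    show "zZ ` {..<d} \<subseteq> Hfull d" using zZ_in by auto
    fix z assume "z \<in> Hfull d" "z \<notin> zZ ` {..<d}"
    then show "U_A d f z * ext_zero d \<rho> z g = 0" using ext_zero_nz by (metis mult_zero_right)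
  qed
  also have "\<dots> = (\<Sum>i<d. if i = f 0 \<and> f \<in> tT ` {..<d} then ext_zero d \<rho> (zZ (f 0)) g else 0)"
  proof (intro sum.cong refl)
    fix i assume i: "i \<in> {..<d}"
    have "f = tT i \<longleftrightarrow> (i = f 0 \<and> f \<in> tT ` {..<d})"
    proof
      assume "f = tT i" then show "i = f 0 \<and> f \<in> tT ` {..<d}" using i by (auto simp: tT_def)
    next
      assume "i = f 0 \<and> f \<in> tT ` {..<d}"
      then obtain a where "a < d" "f = tT a" "i = f 0" by auto
      then show "f = tT i" by (simp add: tT_def)
    qed
    then show "U_A d f (zZ i) * ext_zero d \<rho> (zZ i) g = (if i = f 0 \<and> f \<in> tT ` {..<d} then ext_zero d \<rho> (zZ (f 0)) g else 0)"
      using U_Z[OF f] i by auto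
  qed
  also have "\<dots> = (if f \<in> tT ` {..<d} then ext_zero d \<rho> (zZ (f 0)) g else 0)"
    using Hfull_0[OF f] by (simp add: sum.delta)
  finally show ?thesis .
qed

lemma rho1_eq: "rho1 d \<rho> f g = (if f \<in> tT ` {..<d} \<and> g \<in> tT ` {..<d} then \<rho> (f 0) (g 0) else 0)"
proof (cases "f \<in> Hfull d \<and> g \<in> Hfull d")
  case False
  then have "rho1 d \<rho> f g = 0" by (auto simp: rho1_def op_mult_def)
  moreover have "\<not> (f \<in> tT ` {..<d} \<and> g \<in> tT ` {..<d})" using False tT_in by blast
  ultimately show ?thesis by (simp only: if_False)
next
  case True
  then have f: "f \<in> Hfull d" and g: "g \<in> Hfull d" by auto
  let ?UE = "op_mult (Hfull d) (U_A d) (ext_zero d \<rho>)"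
  have "rho1 d \<rho> f g = (\<Sum>z\<in>Hfull d. ?UE f z * cnj (U_A d g z))"
    using f g by (simp add: rho1_def op_mult_def op_adj_def)
  also have "\<dots> = (\<Sum>i<d. ?UE f (zZ i) * cnj (U_A d g (zZ i)))"
  proof (rule sum_over_image[OF finite_Hfull inj_zZ])
    show "zZ ` {..<d} \<subseteq> Hfull d" using zZ_in by auto
    fix z assume z: "z \<in> Hfull d" "z \<notin> zZ ` {..<d}"
    have "?UE f z = 0"
    proof (cases "f \<in> tT ` {..<d}")
      case True
      then have "f 0 < d" using Hfull_0[OF f] by simp
      then have "ext_zero d \<rho> (zZ (f 0)) z = 0" using z ext_zero_Z zero_qubits_eq
        by (metis Hfull_0 image_eqI lessThan_iff)
      then show ?thesis using UE_eq[OF f z(1)] by simp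
    qed (simp add: UE_eq[OF f z(1)])
    then show "?UE f z * cnj (U_A d g z) = 0" by simp
  qed
  also have "\<dots> = (\<Sum>i<d. if i = g 0 \<and> g \<in> tT ` {..<d} then
                  (if f \<in> tT ` {..<d} then \<rho> (f 0) (g 0) else 0) else 0)"
  proof (intro sum.cong refl)
    fix i assume i: "i \<in> {..<d}"
    have gi: "g = tT i \<longleftrightarrow> (i = g 0 \<and> g \<in> tT ` {..<d})"
    proof
      assume "g = tT i" then show "i = g 0 \<and> g \<in> tT ` {..<d}" using i by (auto simp: tT_def)
    next
      assume "i = g 0 \<and> g \<in> tT ` {..<d}"
      then obtain a where "a < d" "g = tT a" "i = g 0" by auto
      then show "g = tT i" by (simp add: tT_def)
    qed
    have ez: "ext_zero d \<rho> (zZ (f 0)) (zZ i) = \<rho> (f 0) i" if "f 0 < d"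
      using ext_zero_Z[OF that, of \<rho> "zZ i"] zZ_in[of i d] i by (simp add: zZ_def)
    show "?UE f (zZ i) * cnj (U_A d g (zZ i)) = (if i = g 0 \<and> g \<in> tT ` {..<d} then
                  (if f \<in> tT ` {..<d} then \<rho> (f 0) (g 0) else 0) else 0)"
      using UE_eq[OF f zZ_in[of i d]] U_Z[OF g, of i] i gi ez Hfull_0[OF f] by auto
  qed
  also have "\<dots> = (if f \<in> tT ` {..<d} \<and> g \<in> tT ` {..<d} then \<rho> (f 0) (g 0) else 0)"
    using Hfull_0[OF g] by (simp add: sum.delta)
  finally show ?thesis .
qed


lemma LQP: "m \<in> {1..d} \<Longrightarrow> a < d \<Longrightarrow> (\<Sum>j<d. ketbra_q d m a j * T j) = (if a = m - 1 then T (m - 1) else 0)"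
proof -
  assume m: "m \<in> {1..d}" and a: "a < d"
  have e: "(\<Sum>j<d. ketbra_q d m a j * T j) = (\<Sum>j<d. if j = m - 1 then (if a = m - 1 then T (m - 1) else 0) else 0)"
    using m by (intro sum.cong) (auto simp: ketbra_q_def)
  have "m - 1 < d" using m by auto
  then show ?thesis using e by (simp add: sum.delta)
qed

lemma upd_upd0: "(h(0 := a))(0 := b) = h(0 := b)" by simp

lemma W_eq:
  assumes m: "m \<in> {1..d}" and h: "h \<in> Hqubits d" and h': "h' \<in> Hqubits d"
  shows "ptrace_qudit d
            (op_mult (Hfull d)
              (op_mult (Hfull d) (lift_qudit d (ketbra_q d m))
                (op_mult (Hfull d) (lift_qudit d (fourier d)) X))
              (lift_qudit d (op_adj (fourier d)))) h h'
       = (\<Sum>l<d. (\<Sum>i<d. fourier d (m - 1) i * X (h(0 := i)) (h'(0 := l))) * cnj (fourier d (m - 1) l))"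
proof -
  let ?Y1 = "op_mult (Hfull d) (lift_qudit d (fourier d)) X"
  let ?Y2 = "op_mult (Hfull d) (lift_qudit d (ketbra_q d m)) ?Y1"
  let ?Z = "op_mult (Hfull d) ?Y2 (lift_qudit d (op_adj (fourier d)))"
  have Y1: "?Y1 (h(0 := j)) (h'(0 := l)) = (\<Sum>i<d. fourier d j i * X (h(0 := i)) (h'(0 := l)))"
    if "j < d" "l < d" for j l
    using LQ_left[OF upd0_in_q[OF h that(1)] upd0_in_q[OF h' that(2)]] by simp
  have Y2: "?Y2 (h(0 := a)) (h'(0 := l)) = (if a = m - 1 then (\<Sum>i<d. fourier d (m - 1) i * X (h(0 := i)) (h'(0 := l))) else 0)"
    if "a < d" "l < d" for a l
  proof -
    have "?Y2 (h(0 := a)) (h'(0 := l)) = (\<Sum>j<d. ketbra_q d m a j * ?Y1 (h(0 := j)) (h'(0 := l)))"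
      using LQ_left[OF upd0_in_q[OF h that(1)] upd0_in_q[OF h' that(2)]] by simp
    also have "\<dots> = (\<Sum>j<d. ketbra_q d m a j * (\<Sum>i<d. fourier d j i * X (h(0 := i)) (h'(0 := l))))"
      using Y1 that by (intro sum.cong) auto
    also have "\<dots> = (if a = m - 1 then (\<Sum>i<d. fourier d (m - 1) i * X (h(0 := i)) (h'(0 := l))) else 0)"
      by (rule LQP[OF m that(1)])
    finally show ?thesis .
  qed
  have Z: "?Z (h(0 := a)) (h'(0 := a)) = (if a = m - 1 then
      (\<Sum>l<d. (\<Sum>i<d. fourier d (m - 1) i * X (h(0 := i)) (h'(0 := l))) * cnj (fourier d (m - 1) l)) else 0)"
    if "a < d" for a
  proof -
    have "?Z (h(0 := a)) (h'(0 := a)) = (\<Sum>l<d. ?Y2 (h(0 := a)) (h'(0 := l)) * op_adj (fourier d) l a)"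
      using LQ_right[OF upd0_in_q[OF h that] upd0_in_q[OF h' that]] by simp
    also have "\<dots> = (\<Sum>l<d. (if a = m - 1 then (\<Sum>i<d. fourier d (m - 1) i * X (h(0 := i)) (h'(0 := l))) else 0) * cnj (fourier d a l))"
      using Y2 that by (intro sum.cong) (auto simp: op_adj_def)
    also have "\<dots> = (if a = m - 1 then
      (\<Sum>l<d. (\<Sum>i<d. fourier d (m - 1) i * X (h(0 := i)) (h'(0 := l))) * cnj (fourier d (m - 1) l)) else 0)"
      by auto
    finally show ?thesis .
  qed
  have "ptrace_qudit d ?Z h h' = (\<Sum>a<d. ?Z (h(0 := a)) (h'(0 := a)))"
    using h h' by (simp add: ptrace_qudit_def)
  also have "\<dots> = (\<Sum>a<d. if a = m - 1 then
      (\<Sum>l<d. (\<Sum>i<d. fourier d (m - 1) i * X (h(0 := i)) (h'(0 := l))) * cnj (fourier d (m - 1) l)) else 0)"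
    using Z by (intro sum.cong) auto
  also have "\<dots> = (\<Sum>l<d. (\<Sum>i<d. fourier d (m - 1) i * X (h(0 := i)) (h'(0 := l))) * cnj (fourier d (m - 1) l))"
    using m by (subst sum.delta) auto
  finally show ?thesis .
qed


lemma Hq_0: "h \<in> Hqubits d \<Longrightarrow> h 0 = 0"
  unfolding configs_def by auto

lemma tT_upd:
  assumes h: "h \<in> Hqubits d"
  shows "h(0 := i) \<in> tT ` {..<d} \<longleftrightarrow> (i < d \<and> h = eE i)"
proof
  assume "h(0 := i) \<in> tT ` {..<d}"
  then obtain a where a: "a < d" "h(0 := i) = tT a" by auto
  then have "(h(0 := i)) 0 = tT a 0" by simp
  then have ia: "i = a" by (simp add: tT_def)
  have "h = (h(0 := i))(0 := 0)" using Hq_0[OF h] by auto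
  also have "\<dots> = (tT a)(0 := 0)" using a by simp
  also have "\<dots> = eE a" by (auto simp: tT_def eE_def)
  finally show "i < d \<and> h = eE i" using a ia by simp
next
  assume "i < d \<and> h = eE i"
  moreover have "(eE i)(0 := i) = tT i" by (auto simp: tT_def eE_def)
  ultimately show "h(0 := i) \<in> tT ` {..<d}" by auto
qed

lemma X_upd:
  assumes h: "h \<in> Hqubits d" and h': "h' \<in> Hqubits d"
  shows "rho1 d \<rho> (h(0 := i)) (h'(0 := l)) = (if i < d \<and> h = eE i \<and> l < d \<and> h' = eE l then \<rho> i l else 0)"
  unfolding rho1_eq tT_upd[OF h] tT_upd[OF h'] by simp

lemma W_val:
  assumes h: "h \<in> Hqubits d" and h': "h' \<in> Hqubits d"
  shows "(\<Sum>l<d. (\<Sum>i<d. A i * rho1 d \<rho> (h(0 := i)) (h'(0 := l))) * B l) =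
     (if h \<in> eE ` {..<d} \<and> h' \<in> eE ` {..<d} then
        A (THE a. a < d \<and> h = eE a) * \<rho> (THE a. a < d \<and> h = eE a) (THE b. b < d \<and> h' = eE b) * B (THE b. b < d \<and> h' = eE b)
      else 0)"
proof (cases "h \<in> eE ` {..<d} \<and> h' \<in> eE ` {..<d}")
  case True
  then obtain a b where ab: "a < d" "b < d" "h = eE a" "h' = eE b" by auto
  have ta: "(THE a'. a' < d \<and> h = eE a') = a" using ab inj_eE[of UNIV] by (auto dest: injD)
  have tb: "(THE b'. b' < d \<and> h' = eE b') = b" using ab inj_eE[of UNIV] by (auto dest: injD)
  have ea: "\<And>i. (eE a = eE i) = (i = a)" using inj_eE[of UNIV] by (auto dest: injD)
  have eb: "\<And>i. (eE b = eE i) = (i = b)" using inj_eE[of UNIV] by (auto dest: injD)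
  have inner: "(\<Sum>i<d. A i * rho1 d \<rho> (h(0 := i)) (h'(0 := l))) = (if l = b then A a * \<rho> a b else 0)"
    if l: "l < d" for l
  proof -
    have "(\<Sum>i<d. A i * rho1 d \<rho> (h(0 := i)) (h'(0 := l))) = (\<Sum>i<d. if i = a then (if l = b then A a * \<rho> a b else 0) else 0)"
      unfolding X_upd[OF h h'] using ab l by (intro sum.cong refl) (auto simp: ea eb)
    also have "\<dots> = (if l = b then A a * \<rho> a b else 0)" using ab by (simp add: sum.delta)
    finally show ?thesis .
  qed
  have "(\<Sum>l<d. (\<Sum>i<d. A i * rho1 d \<rho> (h(0 := i)) (h'(0 := l))) * B l)
      = (\<Sum>l<d. if l = b then A a * \<rho> a b * B b else 0)"
    using inner by (intro sum.cong refl) auto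
  also have "\<dots> = A a * \<rho> a b * B b" using ab by (simp add: sum.delta)
  finally show ?thesis using True ta tb by simp
next
  case False
  have "(\<Sum>i<d. A i * rho1 d \<rho> (h(0 := i)) (h'(0 := l))) = 0" if "l < d" for l
    unfolding X_upd[OF h h'] using False by (intro sum.neutral ballI) auto
  then have "(\<Sum>l<d. (\<Sum>i<d. A i * rho1 d \<rho> (h(0 := i)) (h'(0 := l))) * B l) = 0"
    by (intro sum.neutral ballI) auto
  then show ?thesis by (subst if_not_P[OF False])
qed

lemma UD_left:
  assumes h: "h \<in> Hqubits d" and h': "h' \<in> Hqubits d"
  shows "op_mult (Hqubits d) (U_D d m) Y h h' = U_D d m h h * Y h h'"
proof -
  have "op_mult (Hqubits d) (U_D d m) Y h h' = (\<Sum>w\<in>Hqubits d. U_D d m h w * Y w h')"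
    using h h' by (simp add: op_mult_def)
  also have "\<dots> = (\<Sum>w\<in>Hqubits d. if h = w then U_D d m h h * Y h h' else 0)"
    by (intro sum.cong refl) (auto simp: U_D_def)
  also have "\<dots> = U_D d m h h * Y h h'" using h finite_Hqubits by (simp add: sum.delta)
  finally show ?thesis .
qed

lemma UD_right:
  assumes h: "h \<in> Hqubits d" and h': "h' \<in> Hqubits d"
  shows "op_mult (Hqubits d) Y (op_adj (U_D d m)) h h' = Y h h' * cnj (U_D d m h' h')"
proof -
  have "op_mult (Hqubits d) Y (op_adj (U_D d m)) h h' = (\<Sum>w\<in>Hqubits d. Y h w * cnj (U_D d m h' w))"
    using h h' by (simp add: op_mult_def op_adj_def)
  also have "\<dots> = (\<Sum>w\<in>Hqubits d. if w = h' then Y h h' * cnj (U_D d m h' h') else 0)"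
    by (intro sum.cong refl) (auto simp: U_D_def)
  also have "\<dots> = Y h h' * cnj (U_D d m h' h')" using h' finite_Hqubits by (simp add: sum.delta)
  finally show ?thesis .
qed

lemma UD_eE:
  assumes a: "a < d"
  shows "U_D d m (eE a) (eE a) = exp (- 2 * of_real pi * \<i> * of_nat (Suc a * m) / of_nat d)"
proof -
  have "eE a \<in> Hqubits d" using eE_in a by auto
  then have "U_D d m (eE a) (eE a) = (\<Prod>j\<in>{1..d}. if eE a j = 1 then exp (- 2 * of_real pi * \<i> * of_nat (j * m) / of_nat d) else 1)"
    by (simp add: U_D_def)
  also have "\<dots> = (\<Prod>j\<in>{1..d}. if j = Suc a then exp (- 2 * of_real pi * \<i> * of_nat (j * m) / of_nat d) else 1)"
    by (intro prod.cong refl) (simp add: eE_def)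
  also have "\<dots> = exp (- 2 * of_real pi * \<i> * of_nat (Suc a * m) / of_nat d)"
    using a by (simp add: prod.delta)
  finally show ?thesis .
qed

lemma phase_cancel:
  assumes a: "a < d" and m: "m \<in> {1..d}"
  shows "U_D d m (eE a) (eE a) * fourier d (m - 1) a = 1 / of_real (sqrt (real d))"
proof -
  have md: "m - 1 < d" using m by auto
  have n: "(a + 1) * (m - 1 + 1) = Suc a * m" using m by auto
  define x where "x = 2 * of_real pi * \<i> * of_nat (Suc a * m) / (of_nat d :: complex)"
  have "U_D d m (eE a) (eE a) = exp (- x)" unfolding UD_eE[OF a] x_def by simp
  moreover have "fourier d (m - 1) a = exp x / of_real (sqrt (real d))"
    unfolding fourier_def x_def using a md n by simp
  ultimately show ?thesis by (simp add: exp_minus field_simps)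
qed

lemma rho2_eq:
  assumes d: "0 < d"
  shows "rho2 d \<rho> f g = (if f \<in> eE ` {..<d} \<and> g \<in> eE ` {..<d} then
        \<rho> (THE a. a < d \<and> f = eE a) (THE b. b < d \<and> g = eE b) else 0)"
proof (cases "f \<in> Hqubits d \<and> g \<in> Hqubits d")
  case False
  then have "rho2 d \<rho> f g = 0" by (auto simp: rho2_def Delta_def op_mult_def)
  moreover have "\<not> (f \<in> eE ` {..<d} \<and> g \<in> eE ` {..<d})" using False eE_in by blast
  ultimately show ?thesis by (simp only: if_False)
next
  case True
  then have h: "f \<in> Hqubits d" and h': "g \<in> Hqubits d" by auto
  have "rho2 d \<rho> f g = (\<Sum>m\<in>{1..d}. U_D d m f f *
      (\<Sum>l<d. (\<Sum>i<d. fourier d (m - 1) i * rho1 d \<rho> (f(0 := i)) (g(0 := l))) * cnj (fourier d (m - 1) l))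
      * cnj (U_D d m g g))"
    unfolding rho2_def Delta_def
  proof (intro sum.cong refl)
    fix m assume m: "m \<in> {1..d}"
    show "op_mult (Hqubits d) (op_mult (Hqubits d) (U_D d m)
          (ptrace_qudit d
            (op_mult (Hfull d)
              (op_mult (Hfull d) (lift_qudit d (ketbra_q d m))
                (op_mult (Hfull d) (lift_qudit d (fourier d)) (rho1 d \<rho>)))
              (lift_qudit d (op_adj (fourier d))))))
        (op_adj (U_D d m)) f g = U_D d m f f *
      (\<Sum>l<d. (\<Sum>i<d. fourier d (m - 1) i * rho1 d \<rho> (f(0 := i)) (g(0 := l))) * cnj (fourier d (m - 1) l))
      * cnj (U_D d m g g)"
      by (simp only: UD_left[OF h h'] UD_right[OF h h'] W_eq[OF m h h'])
  qed
  also have "\<dots> = (\<Sum>m\<in>{1..d}. if f \<in> eE ` {..<d} \<and> g \<in> eE ` {..<d} then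
        \<rho> (THE a. a < d \<and> f = eE a) (THE b. b < d \<and> g = eE b) / of_nat d else 0)"
  proof (intro sum.cong refl)
    fix m assume m: "m \<in> {1..d}"
    show "U_D d m f f *
      (\<Sum>l<d. (\<Sum>i<d. fourier d (m - 1) i * rho1 d \<rho> (f(0 := i)) (g(0 := l))) * cnj (fourier d (m - 1) l))
      * cnj (U_D d m g g) = (if f \<in> eE ` {..<d} \<and> g \<in> eE ` {..<d} then
        \<rho> (THE a. a < d \<and> f = eE a) (THE b. b < d \<and> g = eE b) / of_nat d else 0)"
    proof (cases "f \<in> eE ` {..<d} \<and> g \<in> eE ` {..<d}")
      case True
      then obtain a b where ab: "a < d" "b < d" "f = eE a" "g = eE b" by auto
      have ta: "(THE a'. a' < d \<and> f = eE a') = a" using ab inj_eE[of UNIV] by (auto dest: injD)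
      have tb: "(THE b'. b' < d \<and> g = eE b') = b" using ab inj_eE[of UNIV] by (auto dest: injD)
      have pa: "U_D d m f f * fourier d (m - 1) a = 1 / of_real (sqrt (real d))"
        using phase_cancel[OF ab(1) m] ab by simp
      have pb: "cnj (fourier d (m - 1) b) * cnj (U_D d m g g) = 1 / of_real (sqrt (real d))"
        using arg_cong[OF phase_cancel[OF ab(2) m], of cnj] ab by (simp add: mult.commute)
      have sq: "(1 / of_real (sqrt (real d))) * (1 / of_real (sqrt (real d))) = 1 / (of_nat d :: complex)"
        using d by (simp flip: of_real_mult)
      have "U_D d m f f * (fourier d (m - 1) a * \<rho> a b * cnj (fourier d (m - 1) b)) * cnj (U_D d m g g)
          = (U_D d m f f * fourier d (m - 1) a) * \<rho> a b * (cnj (fourier d (m - 1) b) * cnj (U_D d m g g))"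
        by (simp add: ac_simps)
      also have "\<dots> = \<rho> a b / of_nat d" unfolding pa pb using sq by (simp add: field_simps)
      finally have calc: "U_D d m f f * (fourier d (m - 1) a * \<rho> a b * cnj (fourier d (m - 1) b)) * cnj (U_D d m g g) = \<rho> a b / of_nat d" .
      have Wv: "(\<Sum>l<d. (\<Sum>i<d. fourier d (m - 1) i * rho1 d \<rho> (f(0 := i)) (g(0 := l))) * cnj (fourier d (m - 1) l))
          = fourier d (m - 1) a * \<rho> a b * cnj (fourier d (m - 1) b)"
        using W_val[OF h h', of "fourier d (m - 1)" \<rho> "\<lambda>l. cnj (fourier d (m - 1) l)"] True
        unfolding ta tb by simp
      show ?thesis unfolding Wv ta tb using True calc by simp
    next
      case False
      have "(\<Sum>l<d. (\<Sum>i<d. fourier d (m - 1) i * rho1 d \<rho> (f(0 := i)) (g(0 := l))) * cnj (fourier d (m - 1) l)) = 0"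
        using W_val[OF h h', of "fourier d (m - 1)" \<rho> "\<lambda>l. cnj (fourier d (m - 1) l)"]
        by (subst (asm) if_not_P[OF False])
      then show ?thesis by (subst if_not_P[OF False]) simp
    qed
  qed
  also have "\<dots> = (if f \<in> eE ` {..<d} \<and> g \<in> eE ` {..<d} then
        \<rho> (THE a. a < d \<and> f = eE a) (THE b. b < d \<and> g = eE b) else 0)"
    using d by simp
  finally show ?thesis .
qed


definition Qf :: "nat \<Rightarrow> (nat \<Rightarrow> nat \<Rightarrow> complex) \<Rightarrow> (nat \<Rightarrow> complex) \<Rightarrow> complex" where
  "Qf n \<rho> v = (\<Sum>x<n. cnj (v x) * (\<Sum>y<n. \<rho> x y * v y))"

definition psd :: "nat \<Rightarrow> (nat \<Rightarrow> nat \<Rightarrow> complex) \<Rightarrow> bool" where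
  "psd n \<rho> \<longleftrightarrow> (\<forall>v. Im (Qf n \<rho> v) = 0 \<and> Re (Qf n \<rho> v) \<ge> 0)"

lemma sum_upd_right:
  assumes "a < (n::nat)"
  shows "(\<Sum>y<n. f y * (if y = a then v y + g else v y)) = (\<Sum>y<n. f y * v y) + f a * (g::complex)"
proof -
  have "(\<Sum>y<n. f y * (if y = a then v y + g else v y)) = (\<Sum>y<n. f y * v y + (if y = a then f a * g else 0))"
    by (intro sum.cong) (auto simp: algebra_simps)
  also have "\<dots> = (\<Sum>y<n. f y * v y) + (\<Sum>y<n. if y = a then f a * g else 0)"
    by (simp add: sum.distrib)
  also have "(\<Sum>y<n. if y = a then f a * g else 0) = f a * g"
    using assms sum.delta[of "{..<n}" a "\<lambda>_. f a * g"] by simp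
  finally show ?thesis .
qed

lemma sum_upd_left:
  assumes "a < (n::nat)"
  shows "(\<Sum>y<n. (if y = a then v y + g else v y) * f y) = (\<Sum>y<n. v y * f y) + (g::complex) * f a"
  using sum_upd_right[OF assms, of f v g] by (simp add: mult.commute)

lemma Q_shift:
  assumes a: "a < (n::nat)" and herm: "\<And>x y. \<rho> y x = cnj (\<rho> x y)"
  shows "Qf n \<rho> (\<lambda>x. if x = a then v x + \<gamma> else v x) =
     Qf n \<rho> v + \<gamma> * cnj (\<Sum>y<n. \<rho> a y * v y) + cnj \<gamma> * (\<Sum>y<n. \<rho> a y * v y) + cnj \<gamma> * \<gamma> * \<rho> a a"
proof -
  define r where "r x = (\<Sum>y<n. \<rho> x y * v y)" for x
  have inner: "(\<Sum>y<n. \<rho> x y * (if y = a then v y + \<gamma> else v y)) = r x + \<rho> x a * \<gamma>" for x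
    unfolding r_def by (rule sum_upd_right[OF a])
  have cu: "cnj (if x = a then v x + \<gamma> else v x) = (if x = a then cnj (v x) + cnj \<gamma> else cnj (v x))" for x
    by simp
  have "Qf n \<rho> (\<lambda>x. if x = a then v x + \<gamma> else v x) =
      (\<Sum>x<n. (if x = a then cnj (v x) + cnj \<gamma> else cnj (v x)) * (r x + \<rho> x a * \<gamma>))"
    unfolding Qf_def inner cu ..
  also have "\<dots> = (\<Sum>x<n. (if x = a then cnj (v x) + cnj \<gamma> else cnj (v x)) * r x)
        + (\<Sum>x<n. (if x = a then cnj (v x) + cnj \<gamma> else cnj (v x)) * \<rho> x a) * \<gamma>"
    by (simp add: distrib_left sum.distrib sum_distrib_right mult.assoc)
  also have "(\<Sum>x<n. (if x = a then cnj (v x) + cnj \<gamma> else cnj (v x)) * r x) = Qf n \<rho> v + cnj \<gamma> * r a"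
    unfolding Qf_def r_def by (rule sum_upd_left[OF a])
  also have "(\<Sum>x<n. (if x = a then cnj (v x) + cnj \<gamma> else cnj (v x)) * \<rho> x a) = (\<Sum>x<n. cnj (v x) * \<rho> x a) + cnj \<gamma> * \<rho> a a"
    by (rule sum_upd_left[OF a])
  also have "(\<Sum>x<n. cnj (v x) * \<rho> x a) = cnj (r a)"
  proof -
    have "(\<Sum>x<n. cnj (v x) * \<rho> x a) = (\<Sum>x<n. cnj (\<rho> a x * v x))"
      by (intro sum.cong refl) (simp add: herm[of a] mult.commute)
    also have "\<dots> = cnj (r a)" unfolding r_def cnj_sum ..
    finally show ?thesis .
  qed
  finally show ?thesis unfolding r_def by (simp add: algebra_simps)
qed


lemma Qf_reduce:
  assumes "\<forall>y. \<rho> n y = 0" "\<forall>x. \<rho> x n = 0"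
  shows "Qf (Suc n) \<rho> v = Qf n \<rho> v"
  unfolding Qf_def lessThan_Suc using assms by (simp add: sum.insert)

lemma Qf_sub:
  "Qf n (\<lambda>x y. \<rho> x y - w x * cnj (w y)) v = Qf n \<rho> v - (\<Sum>x<n. cnj (v x) * w x) * (\<Sum>y<n. cnj (w y) * v y)"
proof -
  define C where "C = (\<Sum>y<n. cnj (w y) * v y)"
  have inner: "(\<Sum>y<n. (\<rho> x y - w x * cnj (w y)) * v y) = (\<Sum>y<n. \<rho> x y * v y) - w x * C" for x
    unfolding C_def by (simp add: algebra_simps sum_subtractf sum_distrib_left)
  have "Qf n (\<lambda>x y. \<rho> x y - w x * cnj (w y)) v = (\<Sum>x<n. cnj (v x) * (\<Sum>y<n. \<rho> x y * v y) - cnj (v x) * w x * C)"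
    unfolding Qf_def inner by (simp add: algebra_simps)
  also have "\<dots> = Qf n \<rho> v - (\<Sum>x<n. cnj (v x) * w x) * C"
    unfolding Qf_def by (simp add: sum_subtractf sum_distrib_right)
  finally show ?thesis unfolding C_def .
qed

lemma sum_delta_right: "y < (n::nat) \<Longrightarrow> (\<Sum>z<n. f z * (if z = y then 1 else 0)) = (f y :: complex)"
proof -
  assume y: "y < n"
  have "(\<Sum>z<n. f z * (if z = y then 1 else 0)) = (\<Sum>z<n. if z = y then f y else 0)"
    by (intro sum.cong) auto
  then show ?thesis using y by simp
qed

lemma Qf_delta: "y < n \<Longrightarrow> Qf n \<rho> (\<lambda>x. if x = y then 1 else 0) = \<rho> y y"
proof -
  assume y: "y < n"
  have "Qf n \<rho> (\<lambda>x. if x = y then 1 else 0) = (\<Sum>x<n. cnj (if x = y then 1 else 0) * \<rho> x y)"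
    unfolding Qf_def using sum_delta_right[OF y] by simp
  also have "\<dots> = (\<Sum>x<n. if x = y then \<rho> y y else 0)" by (intro sum.cong) auto
  finally show ?thesis using y by simp
qed

lemma row_zero:
  assumes herm: "\<And>x y. \<rho> y x = cnj (\<rho> x y)" and psd: "psd (Suc n) \<rho>" and rnn: "\<rho> n n = 0"
    and y: "y < Suc n"
  shows "\<rho> n y = 0"
proof (rule ccontr)
  assume nz: "\<rho> n y \<noteq> 0"
  define \<beta> where "\<beta> = \<rho> n y"
  define v where "v = (\<lambda>x. if x = y then 1 else (0::complex))"
  define t where "t = (Re (\<rho> y y) + 1) / (2 * (cmod \<beta>)\<^sup>2)"
  have bpos: "(cmod \<beta>)\<^sup>2 > 0" using nz by (simp add: \<beta>_def)
  define \<gamma> where "\<gamma> = - of_real t * \<beta>"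
  have sb: "(\<Sum>z<Suc n. \<rho> n z * v z) = \<beta>" unfolding v_def \<beta>_def using sum_delta_right[OF y] by simp
  have Qv: "Qf (Suc n) \<rho> v = \<rho> y y" unfolding v_def by (rule Qf_delta[OF y])
  have "Qf (Suc n) \<rho> (\<lambda>x. if x = n then v x + \<gamma> else v x) = \<rho> y y + \<gamma> * cnj \<beta> + cnj \<gamma> * \<beta>"
    using Q_shift[where a=n and n="Suc n" and \<rho>=\<rho> and v=v and \<gamma>=\<gamma>, OF lessI herm] unfolding sb Qv rnn by simp
  also have "\<dots> = \<rho> y y - of_real (2 * t * (cmod \<beta>)\<^sup>2)"
    unfolding \<gamma>_def by (simp add: complex_norm_square[symmetric] algebra_simps del: of_real_power)
  finally have "Re (Qf (Suc n) \<rho> (\<lambda>x. if x = n then v x + \<gamma> else v x)) = Re (\<rho> y y) - 2 * t * (cmod \<beta>)\<^sup>2"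
    by simp
  also have "\<dots> = -1" unfolding t_def using bpos by (simp add: field_simps)
  finally show False using psd unfolding psd_def by (metis neg_0_le_iff_le not_one_le_zero)
qed


lemma psd_shift:
  assumes "psd n \<rho>" shows "Im (Qf n \<rho> u) = 0" "Re (Qf n \<rho> u) \<ge> 0"
  using assms unfolding psd_def by auto

lemma gram:
  "\<forall>\<rho>. (\<forall>x y. n \<le> x \<or> n \<le> y \<longrightarrow> \<rho> x y = 0) \<longrightarrow> (\<forall>x y. \<rho> y x = cnj (\<rho> x y)) \<longrightarrow> psd n \<rho> \<longrightarrow>
     (\<exists>ws. (\<forall>w\<in>set ws. \<forall>x. n \<le> x \<longrightarrow> w x = 0) \<and> \<rho> = (\<lambda>x y. \<Sum>w\<leftarrow>ws. w x * cnj (w y)))"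
proof (induction n)
  case 0
  show ?case
  proof (intro allI impI)
    fix \<rho> :: "nat \<Rightarrow> nat \<Rightarrow> complex" assume "\<forall>x y. 0 \<le> x \<or> 0 \<le> y \<longrightarrow> \<rho> x y = 0"
    then have "\<rho> = (\<lambda>x y. \<Sum>w\<leftarrow>[]. w x * cnj (w y))" by auto
    then show "\<exists>ws. (\<forall>w\<in>set ws. \<forall>x. 0 \<le> x \<longrightarrow> w x = 0) \<and> \<rho> = (\<lambda>x y. \<Sum>w\<leftarrow>ws. w x * cnj (w y))"
      by (intro exI[of _ "[]"]) simp
  qed
next
  case (Suc n)
  show ?case
  proof (intro allI impI)
    fix \<rho> :: "nat \<Rightarrow> nat \<Rightarrow> complex"
    assume supp: "\<forall>x y. Suc n \<le> x \<or> Suc n \<le> y \<longrightarrow> \<rho> x y = 0"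
      and hermA: "\<forall>x y. \<rho> y x = cnj (\<rho> x y)" and psd: "psd (Suc n) \<rho>"
    have herm: "\<And>x y. \<rho> y x = cnj (\<rho> x y)" using hermA by blast
    show "\<exists>ws. (\<forall>w\<in>set ws. \<forall>x. Suc n \<le> x \<longrightarrow> w x = 0) \<and> \<rho> = (\<lambda>x y. \<Sum>w\<leftarrow>ws. w x * cnj (w y))"
    proof (cases "\<rho> n n = 0")
      case True
      have row: "\<forall>y. \<rho> n y = 0"
      proof
        fix y show "\<rho> n y = 0"
        proof (cases "y < Suc n")
          case True then show ?thesis using row_zero[OF herm psd \<open>\<rho> n n = 0\<close>] by blast
        next
          case False then show ?thesis using supp by auto
        qed
      qed
      have col: "\<forall>x. \<rho> x n = 0" using row herm by (metis complex_cnj_zero)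
      have supp': "\<forall>x y. n \<le> x \<or> n \<le> y \<longrightarrow> \<rho> x y = 0"
      proof (intro allI impI)
        fix x y assume "n \<le> x \<or> n \<le> y"
        then consider "x = n" | "y = n" | "Suc n \<le> x" | "Suc n \<le> y" by linarith
        then show "\<rho> x y = 0" by cases (use supp row col in auto)
      qed
      have psd': "psd n \<rho>" using psd Qf_reduce[OF row col] unfolding psd_def by simp
      obtain ws where ws: "\<forall>w\<in>set ws. \<forall>x. n \<le> x \<longrightarrow> w x = 0" "\<rho> = (\<lambda>x y. \<Sum>w\<leftarrow>ws. w x * cnj (w y))"
        using mp[OF mp[OF mp[OF spec[OF Suc.IH, of \<rho>] supp'] hermA] psd'] by blast
      show ?thesis using ws by (intro exI[of _ ws]) auto
    next
      case False
      have im0: "Im (\<rho> n n) = 0" using herm[of n n] by (metis cnj.simps(2) complex.sel(2) neg_equal_zero)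
      have "Re (\<rho> n n) \<ge> 0" using psd_shift(2)[OF psd, of "\<lambda>x. if x = n then 1 else 0"] Qf_delta[of n "Suc n" \<rho>] by simp
      moreover have "Re (\<rho> n n) \<noteq> 0" using False im0 complex_eq_iff by auto
      ultimately have rpos: "Re (\<rho> n n) > 0" by simp
      define r where "r = Re (\<rho> n n)"
      have rnn: "\<rho> n n = of_real r" unfolding r_def using im0 complex_eq_iff by auto
      define s where "s = complex_of_real (sqrt r)"
      have ss: "s * s = of_real r" unfolding s_def using rpos r_def by (simp flip: of_real_mult)
      have s0: "s \<noteq> 0" unfolding s_def using rpos r_def by simp
      have cs: "cnj s = s" unfolding s_def by simp
      define w where "w x = \<rho> x n / s" for x
      define \<sigma> where "\<sigma> x y = \<rho> x y - w x * cnj (w y)" for x y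
      have wout: "w x = 0" if "Suc n \<le> x" for x using supp that by (simp add: w_def)
      have cw: "cnj (w y) = \<rho> n y / s" for y unfolding w_def using herm[of y n] cs by simp
      have srow: "\<forall>y. \<sigma> n y = 0"
      proof
        fix y have "w n * cnj (w y) = \<rho> n n * \<rho> n y / (s * s)" unfolding cw unfolding w_def by simp
        also have "\<dots> = \<rho> n y" unfolding ss rnn using rpos r_def by simp
        finally show "\<sigma> n y = 0" unfolding \<sigma>_def by simp
      qed
      have sherm: "\<sigma> y x = cnj (\<sigma> x y)" for x y
        unfolding \<sigma>_def using herm[of x y] by (simp add: mult.commute)
      have scol: "\<forall>x. \<sigma> x n = 0" using srow sherm by (metis complex_cnj_zero)
      have ssupp: "\<forall>x y. n \<le> x \<or> n \<le> y \<longrightarrow> \<sigma> x y = 0"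
      proof (intro allI impI)
        fix x y assume "n \<le> x \<or> n \<le> y"
        then consider "x = n" | "y = n" | "Suc n \<le> x" | "Suc n \<le> y" by linarith
        then show "\<sigma> x y = 0"
          by cases (use srow scol supp wout in \<open>auto simp: \<sigma>_def\<close>)
      qed
      have spsd: "psd n \<sigma>" unfolding psd_def
      proof
        fix v
        define \<beta> where "\<beta> = (\<Sum>y<Suc n. \<rho> n y * v y)"
        define \<gamma> where "\<gamma> = - \<beta> / of_real r"
        have c1: "(\<Sum>y<Suc n. cnj (w y) * v y) = \<beta> / s"
          unfolding cw \<beta>_def by (simp add: sum_divide_distrib del: sum.lessThan_Suc)
        have c2: "(\<Sum>x<Suc n. cnj (v x) * w x) = cnj (\<beta> / s)"
        proof -
          have "(\<Sum>x<Suc n. cnj (v x) * w x) = cnj (\<Sum>y<Suc n. cnj (w y) * v y)"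
            by (simp add: cnj_sum mult.commute del: sum.lessThan_Suc)
          then show ?thesis unfolding c1 .
        qed
        have "Qf n \<sigma> v = Qf (Suc n) \<sigma> v" using Qf_reduce[OF srow scol] by simp
        also have "\<dots> = Qf (Suc n) \<rho> v - cnj \<beta> * \<beta> / of_real r"
          unfolding \<sigma>_def Qf_sub c1 c2 using s0 cs ss by (simp add: field_simps)
        also have "\<dots> = Qf (Suc n) \<rho> (\<lambda>x. if x = n then v x + \<gamma> else v x)"
          unfolding Q_shift[where a=n and n="Suc n" and \<rho>=\<rho> and v=v and \<gamma>=\<gamma>, OF lessI herm]
          unfolding \<beta>_def[symmetric] \<gamma>_def rnn using rpos r_def by (simp add: field_simps)
        finally show "Im (Qf n \<sigma> v) = 0 \<and> Re (Qf n \<sigma> v) \<ge> 0" using psd_shift[OF psd] by simp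
      qed
      have shermA: "\<forall>x y. \<sigma> y x = cnj (\<sigma> x y)" by (intro allI) (rule sherm)
      obtain ws where ws: "\<forall>w\<in>set ws. \<forall>x. n \<le> x \<longrightarrow> w x = 0" "\<sigma> = (\<lambda>x y. \<Sum>w\<leftarrow>ws. w x * cnj (w y))"
        using mp[OF mp[OF mp[OF spec[OF Suc.IH, of \<sigma>] ssupp] shermA] spsd] by blast
      have "\<rho> = (\<lambda>x y. \<Sum>w\<leftarrow>w # ws. w x * cnj (w y))"
      proof (intro ext)
        fix x y
        have "\<rho> x y = w x * cnj (w y) + \<sigma> x y" unfolding \<sigma>_def by simp
        then show "\<rho> x y = (\<Sum>w\<leftarrow>w # ws. w x * cnj (w y))" using ws(2) by simp
      qed
      then show ?thesis using ws(1) wout by (intro exI[of _ "w # ws"]) auto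
    qed
  qed
qed


lemma cmod_sq_c: "(complex_of_real (cmod z))\<^sup>2 = z * cnj z"
  using complex_norm_square[of z] by simp

definition Nw :: "nat \<Rightarrow> (nat \<Rightarrow> complex) \<Rightarrow> real" where
  "Nw d w = (\<Sum>x<d. (cmod (w x))\<^sup>2)"

lemma Nw_nonneg: "Nw d w \<ge> 0" unfolding Nw_def by (simp add: sum_nonneg)

lemma Nw_zero: "Nw d w = 0 \<Longrightarrow> x < d \<Longrightarrow> w x = 0"
  unfolding Nw_def by (subst (asm) sum_nonneg_eq_0_iff) auto

lemma normalize_term:
  assumes "Nw d w \<noteq> 0"
  shows "complex_of_real (Nw d w) * (w x / of_real (sqrt (Nw d w))) * cnj (w y / of_real (sqrt (Nw d w))) = w x * cnj (w y)"
proof -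
  have p: "Nw d w > 0" using assms Nw_nonneg[of d w] by linarith
  have "complex_of_real (sqrt (Nw d w)) * complex_of_real (sqrt (Nw d w)) = complex_of_real (Nw d w)"
    using p by (simp flip: of_real_mult)
  moreover have "complex_of_real (sqrt (Nw d w)) \<noteq> 0" using p by simp
  ultimately show ?thesis by (simp add: field_simps)
qed

lemma normalize_state:
  assumes "Nw d w \<noteq> 0" and supp: "\<forall>x. d \<le> x \<longrightarrow> w x = 0"
  shows "is_state {..<d} (\<lambda>x. w x / of_real (sqrt (Nw d w)))"
proof -
  have p: "Nw d w > 0" using assms Nw_nonneg[of d w] by linarith
  have "(\<Sum>x<d. (cmod (w x / of_real (sqrt (Nw d w))))\<^sup>2) = (\<Sum>x<d. (cmod (w x))\<^sup>2 / Nw d w)"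
    using p by (intro sum.cong refl) (simp add: norm_divide power_divide)
  also have "\<dots> = Nw d w / Nw d w" unfolding Nw_def by (rule sum_divide_distrib[symmetric])
  also have "\<dots> = 1" using p by simp
  finally show ?thesis using supp by (auto simp: is_state_def)
qed

lemma decomp_exists:
  fixes d :: nat and \<rho> :: "nat \<Rightarrow> nat \<Rightarrow> complex"
  assumes dens: "density_op {..<d} \<rho>"
  shows "\<exists>ps. pure_decomp {..<d} \<rho> ps"
proof -
  have D1: "\<forall>x y. x \<notin> {..<d} \<or> y \<notin> {..<d} \<longrightarrow> \<rho> x y = 0"
    and D2: "\<forall>x\<in>{..<d}. \<forall>y\<in>{..<d}. \<rho> y x = cnj (\<rho> x y)"
    and D3: "\<forall>v :: nat \<Rightarrow> complex.
        Im (\<Sum>x\<in>{..<d}. \<Sum>y\<in>{..<d}. cnj (v x) * \<rho> x y * v y) = 0 \<and>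
        Re (\<Sum>x\<in>{..<d}. \<Sum>y\<in>{..<d}. cnj (v x) * \<rho> x y * v y) \<ge> 0"
    and D4: "(\<Sum>x\<in>{..<d}. \<rho> x x) = 1"
    using dens unfolding density_op_def by blast+
  have supp: "\<forall>x y. d \<le> x \<or> d \<le> y \<longrightarrow> \<rho> x y = 0" using D1 by (simp add: not_less)
  have herm: "\<forall>x y. \<rho> y x = cnj (\<rho> x y)"
  proof (intro allI)
    fix x y show "\<rho> y x = cnj (\<rho> x y)"
    proof (cases "x < d \<and> y < d")
      case True
      then have "x \<in> {..<d}" "y \<in> {..<d}" by auto
      then show ?thesis using D2 by blast
    next
      case False then show ?thesis using supp by (metis complex_cnj_zero not_le)
    qed
  qed
  have qf: "(\<Sum>x\<in>{..<d}. \<Sum>y\<in>{..<d}. cnj (v x) * \<rho> x y * v y) = Qf d \<rho> v" for v :: "nat \<Rightarrow> complex"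
    unfolding Qf_def by (simp add: sum_distrib_left mult.assoc)
  have psd: "psd d \<rho>" using D3 unfolding psd_def qf by blast
  obtain ws where wsupp: "\<forall>w\<in>set ws. \<forall>x. d \<le> x \<longrightarrow> w x = 0" and rws: "\<rho> = (\<lambda>x y. \<Sum>w\<leftarrow>ws. w x * cnj (w y))"
    using mp[OF mp[OF mp[OF spec[OF gram, of d \<rho>] supp] herm] psd] by blast
  define ps where "ps = map (\<lambda>w. (Nw d w, \<lambda>x. w x / of_real (sqrt (Nw d w)))) (filter (\<lambda>w. Nw d w \<noteq> 0) ws)"
  have zero_all: "w x = 0" if "w \<in> set ws" "Nw d w = 0" for w x
  proof (cases "x < d")
    case True then show ?thesis using Nw_zero that by blast
  next
    case False then show ?thesis using wsupp that by auto
  qed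
  have A: "\<forall>(p, v) \<in> set ps. p > 0 \<and> is_state {..<d} v"
    unfolding ps_def using Nw_nonneg normalize_state wsupp
    by (auto simp: order_less_le)
  have sumN: "(\<Sum>(p, v) \<leftarrow> ps. p) = (\<Sum>w\<leftarrow>ws. Nw d w)"
    unfolding ps_def using zero_all
  proof (induction ws)
    case (Cons w ws) then show ?case by auto
  qed simp
  have swap: "(\<Sum>w\<leftarrow>ws. Nw d w) = (\<Sum>x<d. \<Sum>w\<leftarrow>ws. (cmod (w x))\<^sup>2)"
    unfolding Nw_def by (induction ws) (auto simp: sum.distrib)
  have diag: "\<rho> x x = complex_of_real (\<Sum>w\<leftarrow>ws. (cmod (w x))\<^sup>2)" for x
    unfolding rws by (induction ws) (auto simp: cmod_sq_c)
  from D4 have "complex_of_real (\<Sum>x<d. \<Sum>w\<leftarrow>ws. (cmod (w x))\<^sup>2) = 1" by (simp add: diag)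
  then have B: "(\<Sum>(p, v) \<leftarrow> ps. p) = 1" unfolding sumN swap by (simp only: of_real_eq_1_iff)
  have C: "\<rho> = (\<lambda>x y. \<Sum>(p, v) \<leftarrow> ps. complex_of_real p * v x * cnj (v y))"
  proof (intro ext)
    fix x y
    show "\<rho> x y = (\<Sum>(p, v) \<leftarrow> ps. complex_of_real p * v x * cnj (v y))"
      unfolding rws ps_def using zero_all
    proof (induction ws)
      case (Cons w ws) then show ?case using normalize_term[of d w x y] by (cases "Nw d w = 0") auto
    qed simp
  qed
  show ?thesis using A B C unfolding pure_decomp_def by blast
qed


definition cond :: "nat \<Rightarrow> (nat \<Rightarrow> nat \<Rightarrow> complex) \<Rightarrow> nat \<Rightarrow> bool" where
  "cond d \<rho> j \<longleftrightarrow> (\<exists>ps. pure_decomp {..<d} \<rho> ps \<and> (\<forall>(p, c) \<in> set ps. coh_rank d c \<le> j))"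

lemma pd_nonempty: "pure_decomp H \<rho> ps \<Longrightarrow> set ps \<noteq> {}"
  unfolding pure_decomp_def by auto

lemma Max_le_ps:
  assumes "set ps \<noteq> {}"
  shows "Max ((\<lambda>(p, v). coh_rank d v) ` set ps) \<le> j \<longleftrightarrow> (\<forall>(p, c) \<in> set ps. coh_rank d c \<le> j)"
  using assms by (subst Max_le_iff) auto

lemma CN_iff:
  assumes ex: "\<exists>ps. pure_decomp {..<d} \<rho> ps" and k: "1 \<le> k"
  shows "coh_number d \<rho> = k \<longleftrightarrow> cond d \<rho> k \<and> \<not> cond d \<rho> (k - 1)"
proof -
  define D where "D = {ps. pure_decomp {..<d} \<rho> ps}"
  define M where "M ps = Max ((\<lambda>(p, v). coh_rank d v) ` set ps)" for ps :: "(real \<times> (nat \<Rightarrow> complex)) list"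
  have CN: "coh_number d \<rho> = Inf (M ` D)" unfolding coh_number_def D_def M_def ..
  have ne: "M ` D \<noteq> {}" using ex unfolding D_def by auto
  have inS: "Inf (M ` D) \<in> M ` D" using Inf_nat_def1[OF ne] .
  have low: "Inf (M ` D) \<le> M ps" if "ps \<in> D" for ps
    using that by (intro cInf_lower) (auto intro: bdd_belowI[of _ 0])
  have Mle: "M ps \<le> j \<longleftrightarrow> (\<forall>(p, c) \<in> set ps. coh_rank d c \<le> j)" if "ps \<in> D" for ps j
    unfolding M_def using that Max_le_ps pd_nonempty unfolding D_def by blast
  have condM: "cond d \<rho> j \<longleftrightarrow> (\<exists>ps\<in>D. M ps \<le> j)" for j
  proof
    assume "cond d \<rho> j"
    then obtain ps where "pure_decomp {..<d} \<rho> ps" "\<forall>(p, c) \<in> set ps. coh_rank d c \<le> j"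
      unfolding cond_def by blast
    then show "\<exists>ps\<in>D. M ps \<le> j" using Mle unfolding D_def by blast
  next
    assume "\<exists>ps\<in>D. M ps \<le> j"
    then obtain ps where "ps \<in> D" "M ps \<le> j" by blast
    then show "cond d \<rho> j" using Mle unfolding cond_def D_def by blast
  qed
  show ?thesis
  proof
    assume "coh_number d \<rho> = k"
    then have e: "Inf (M ` D) = k" using CN by simp
    obtain ps where ps: "ps \<in> D" "M ps = k" using inS e by auto
    have "cond d \<rho> k" using condM ps by auto
    moreover have "\<not> cond d \<rho> (k - 1)"
    proof
      assume "cond d \<rho> (k - 1)"
      then obtain ps' where "ps' \<in> D" "M ps' \<le> k - 1" using condM by auto
      then have "k \<le> k - 1" using low e by fastforce
      then show False using k by simp
    qed
    ultimately show "cond d \<rho> k \<and> \<not> cond d \<rho> (k - 1)" by simp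
  next
    assume a: "cond d \<rho> k \<and> \<not> cond d \<rho> (k - 1)"
    then obtain ps where "ps \<in> D" "M ps \<le> k" using condM by auto
    then have le: "Inf (M ` D) \<le> k" using low by fastforce
    obtain ps0 where ps0: "ps0 \<in> D" "M ps0 = Inf (M ` D)" using inS by auto
    have "\<not> M ps0 \<le> k - 1" using a condM ps0 by auto
    then show "coh_number d \<rho> = k" using le ps0 CN by simp
  qed
qed


lemma rho1_t: "a < d \<Longrightarrow> b < d \<Longrightarrow> rho1 d \<rho> (tT a) (tT b) = \<rho> a b"
  unfolding rho1_eq by (auto simp: tT_def)

lemma rho1_0: "f \<notin> tT ` {..<d} \<or> g \<notin> tT ` {..<d} \<Longrightarrow> rho1 d \<rho> f g = 0"
  unfolding rho1_eq by auto

lemma the_eE: "a < d \<Longrightarrow> (THE a'. a' < d \<and> eE a = eE a') = a"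
  using inj_eE[of UNIV] by (auto dest: injD)

lemma rho2_t: "0 < d \<Longrightarrow> a < d \<Longrightarrow> b < d \<Longrightarrow> rho2 d \<rho> (eE a) (eE b) = \<rho> a b"
  unfolding rho2_eq by (simp add: the_eE)

lemma rho2_0: "0 < d \<Longrightarrow> f \<notin> eE ` {..<d} \<or> g \<notin> eE ` {..<d} \<Longrightarrow> rho2 d \<rho> f g = 0"
  unfolding rho2_eq by auto

lemma state_nz: "is_state {..<d} c \<Longrightarrow> \<exists>i0<d. c i0 \<noteq> 0"
proof (rule ccontr)
  assume s: "is_state {..<d} c" and "\<not> (\<exists>i0<d. c i0 \<noteq> 0)"
  then have "(\<Sum>x\<in>{..<d}. (cmod (c x))\<^sup>2) = 0" by simp
  then show False using s by (simp add: is_state_def)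
qed

lemma rho0_of: "density_op {..<d} \<rho> \<Longrightarrow> a \<notin> {..<d} \<or> b \<notin> {..<d} \<Longrightarrow> \<rho> a b = 0"
  unfolding density_op_def by blast

lemma rho1_prod:
  assumes dens: "density_op {..<d} \<rho>" and j: "2 \<le> j"
  shows "k_producible {0..d} (qdims d) j (rho1 d \<rho>) \<longleftrightarrow> cond d \<rho> (j - 1)"
proof
  assume "k_producible {0..d} (qdims d) j (rho1 d \<rho>)"
  then obtain qs where pd: "pure_decomp (Hfull d) (rho1 d \<rho>) qs"
    and kp: "\<forall>(p, v) \<in> set qs. k_producible_pure {0..d} (qdims d) j v"
    unfolding k_producible_def by blast
  note td = transfer_down[where H="Hfull d" and t=tT and d=d and R="rho1 d \<rho>" and \<rho>=\<rho>, OF finite_Hfull inj_tT tT_in rho1_t rho1_0 rho0_of[OF dens] pd]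
  have "\<forall>(p, c) \<in> set (map (\<lambda>(p, v). (p, projv tT d v)) qs). coh_rank d c \<le> j - 1"
  proof (clarsimp)
    fix p v assume pv: "(p, v) \<in> set qs"
    have "v = liftv tT d (projv tT d v)" using td(1) pv by blast
    then have "k_producible_pure {0..d} (qdims d) j (liftv tT d (projv tT d v))" using kp pv by auto
    then show "coh_rank d (projv tT d v) \<le> j - Suc 0" using prodT_down j by fastforce
  qed
  then show "cond d \<rho> (j - 1)" unfolding cond_def using td(2) by blast
next
  assume "cond d \<rho> (j - 1)"
  then obtain ps where pd: "pure_decomp {..<d} \<rho> ps" and r: "\<forall>(p, c) \<in> set ps. coh_rank d c \<le> j - 1"
    unfolding cond_def by blast
  have "pure_decomp (Hfull d) (rho1 d \<rho>) (map (\<lambda>(p, c). (p, liftv tT d c)) ps)"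
    by (rule transfer_up[where H="Hfull d" and t=tT and d=d and R="rho1 d \<rho>" and \<rho>=\<rho>, OF finite_Hfull inj_tT tT_in rho1_t rho1_0 pd])
  moreover have "\<forall>(p, v) \<in> set (map (\<lambda>(p, c). (p, liftv tT d c)) ps). k_producible_pure {0..d} (qdims d) j v"
    using r prodT_up j by auto
  ultimately show "k_producible {0..d} (qdims d) j (rho1 d \<rho>)" unfolding k_producible_def by blast
qed

lemma rho2_prod:
  assumes dens: "density_op {..<d} \<rho>" and j: "1 \<le> j" and d: "0 < d"
  shows "k_producible {1..d} (qdims d) j (rho2 d \<rho>) \<longleftrightarrow> cond d \<rho> j"
proof
  assume "k_producible {1..d} (qdims d) j (rho2 d \<rho>)"
  then obtain qs where pd: "pure_decomp (Hqubits d) (rho2 d \<rho>) qs"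
    and kp: "\<forall>(p, v) \<in> set qs. k_producible_pure {1..d} (qdims d) j v"
    unfolding k_producible_def by blast
  note td = transfer_down[where H="Hqubits d" and t=eE and d=d and R="rho2 d \<rho>" and \<rho>=\<rho>, OF finite_Hqubits inj_eE eE_in rho2_t[OF d] rho2_0[OF d] rho0_of[OF dens] pd]
  have "\<forall>(p, c) \<in> set (map (\<lambda>(p, v). (p, projv eE d v)) qs). coh_rank d c \<le> j"
  proof (clarsimp)
    fix p v assume pv: "(p, v) \<in> set qs"
    have "v = liftv eE d (projv eE d v)" using td(1) pv by blast
    then have kv: "k_producible_pure {1..d} (qdims d) j (liftv eE d (projv eE d v))" using kp pv by auto
    have "(p, projv eE d v) \<in> set (map (\<lambda>(p, v). (p, projv eE d v)) qs)" using pv by force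
    then have "is_state {..<d} (projv eE d v)" using td(2) unfolding pure_decomp_def by blast
    then obtain i0 where "i0 < d" "projv eE d v i0 \<noteq> 0" using state_nz by blast
    then show "coh_rank d (projv eE d v) \<le> j" using prodE_down[OF kv] by blast
  qed
  then show "cond d \<rho> j" unfolding cond_def using td(2) by blast
next
  assume "cond d \<rho> j"
  then obtain ps where pd: "pure_decomp {..<d} \<rho> ps" and r: "\<forall>(p, c) \<in> set ps. coh_rank d c \<le> j"
    unfolding cond_def by blast
  have pd2: "pure_decomp (Hqubits d) (rho2 d \<rho>) (map (\<lambda>(p, c). (p, liftv eE d c)) ps)"
    by (rule transfer_up[where H="Hqubits d" and t=eE and d=d and R="rho2 d \<rho>" and \<rho>=\<rho>, OF finite_Hqubits inj_eE eE_in rho2_t[OF d] rho2_0[OF d] pd])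
  have h: "k_producible_pure {1..d} (qdims d) j (liftv eE d c)" if pc: "(p, c) \<in> set ps" for p c
  proof -
    have "is_state {..<d} c" using pd pc unfolding pure_decomp_def by blast
    then obtain i0 where "i0 < d" "c i0 \<noteq> 0" using state_nz by blast
    then show "k_producible_pure {1..d} (qdims d) j (liftv eE d c)" using prodE_up r pc j by blast
  qed
  have X: "\<forall>(p, v) \<in> set (map (\<lambda>(p, c). (p, liftv eE d c)) ps). k_producible_pure {1..d} (qdims d) j v"
    using h by auto
  show "k_producible {1..d} (qdims d) j (rho2 d \<rho>)" unfolding k_producible_def
    using pd2 X by blast
qed

theorem theorem2:
  fixes d k :: nat and \<rho> :: "nat \<Rightarrow> nat \<Rightarrow> complex"
  assumes "density_op {..<d} \<rho>"
    and "2 \<le> k" and "k \<le> d"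
  shows "(coh_number d \<rho> = k \<longleftrightarrow> ent_depth_is {0..d} (qdims d) (rho1 d \<rho>) (k + 1))
       \<and> (ent_depth_is {0..d} (qdims d) (rho1 d \<rho>) (k + 1) \<longleftrightarrow> ent_depth_is {1..d} (qdims d) (rho2 d \<rho>) k)"
proof -
  have d: "0 < d" using assms by simp
  have e1: "ent_depth_is {0..d} (qdims d) (rho1 d \<rho>) (k + 1) \<longleftrightarrow> cond d \<rho> k \<and> \<not> cond d \<rho> (k - 1)"
    unfolding ent_depth_is_def using rho1_prod[OF assms(1), of "k + 1"] rho1_prod[OF assms(1), of k] assms(2)
    by simp
  have e2: "ent_depth_is {1..d} (qdims d) (rho2 d \<rho>) k \<longleftrightarrow> cond d \<rho> k \<and> \<not> cond d \<rho> (k - 1)"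
    unfolding ent_depth_is_def using rho2_prod[OF assms(1) _ d, of k] rho2_prod[OF assms(1) _ d, of "k - 1"] assms(2)
    by simp
  have e0: "coh_number d \<rho> = k \<longleftrightarrow> cond d \<rho> k \<and> \<not> cond d \<rho> (k - 1)"
    using CN_iff[OF decomp_exists[OF assms(1)]] assms(2) by simp
  show ?thesis using e0 e1 e2 by simp
qed


end
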